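(* Let $\alpha>1$, $s>0$, $L\ge1$. The GAP model is edge $(\alpha,\frac{L\alpha}{2s^2})$-GDP: for every $v\in[n]\setminus[m]$ and every pair of edge-level adjacent datasets $\mathcal{D},\mathcal{D}'$, $D_\alpha(\mathcal{M}(v;\mathcal{D})\,\|\,\mathcal{M}(v;\mathcal{D}'))\le\frac{L\alpha}{2s^2}$.
   Context: A graph dataset is $\mathcal{D}=(\mathbf{X},\mathbf{Y},\mathbf{A})$ with node set $[n]$, $\mathbf{X}\in\mathbb{R}^{n\times F}$, $\mathbf{Y}\in\{0,1\}^{m\times C}$ (labels of nodes $1,\dots,m$; nodes in $[n]\setminus[m]$ are to be predicted), and $\mathbf{A}\in\{0,1\}^{n\times n}$ the adjacency matrix of a directed graph without self-loops. Edge-level adjacency: same $\mathbf{X},\mathbf{Y}$, adjacency matrices differing in exactly one entry. Rényi divergence of order $\alpha>1$: $D_\alpha(X\|Y)=\frac{1}{\alpha-1}\log\mathbb{E}_{x\sim Q}[(P(x)/Q(x))^\alpha]$. Row-normalization divides each row by its Euclidean norm. GAP model (edge setting): $\mathbf{W}^{(X)}$ is a random weight whose distribution depends only on $(\mathbf{X},\mathbf{Y})$; $f(\cdot;\mathbf{W})$ is a map whose $i$-th output row depends only on $\mathbf{X}_i$ and $\mathbf{W}$; $\mathbf{H}^{(0)}=\text{row-normalization}(f(\mathbf{X};\mathbf{W}^{(X)}))$, $\mathbf{H}^{(l+1)}=\text{row-normalization}(\mathbf{A}\mathbf{H}^{(l)}+\mathbf{N}^{(l)})$ for $l=0,\dots,L-1$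 with independent noise matrices having i.i.d. $\mathcal{N}(0,s^2)$ entries; $\mathbf{Z}=\mathbf{H}^{(0)}\Vert\cdots\Vert\mathbf{H}^{(L)}$; $\Theta=\mathcal{B}(\mathbf{Y},\mathbf{Z})$ for a randomized algorithm $\mathcal{B}$ with independent internal randomness; $\widehat{\mathbf{Y}}_v=g(\Theta,\mathbf{Z}_v)$ for a fixed deterministic $g$; and $\mathcal{M}(v;\mathcal{D})=(\widehat{\mathbf{Y}}_v,(\mathbf{W}^{(X)},\Theta))$. *)

theory Defs
  imports "HOL-Probability.Probability"
begin

definition renyi_integral :: "real \<Rightarrow> 'a measure \<Rightarrow> 'a measure \<Rightarrow> ennreal" where
  "renyi_integral \<alpha> P Q = (\<integral>\<^sup>+ x. ennreal ((enn2real (RN_deriv Q P x)) powr \<alpha>) \<partial>Q)"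

definition renyi_divergence :: "real \<Rightarrow> 'a measure \<Rightarrow> 'a measure \<Rightarrow> ereal" where
  "renyi_divergence \<alpha> P Q =
     (if sets P = sets Q \<and> absolutely_continuous Q P \<and> renyi_integral \<alpha> P Q \<noteq> \<infinity>
      then ereal (ln (enn2real (renyi_integral \<alpha> P Q)) / (\<alpha> - 1))
      else \<infinity>)"

text \<open>Adjacency matrices are \<open>nat \<Rightarrow> nat \<Rightarrow> bool\<close>; only the block below n is meaningful.\<close>

definition loopless :: "nat \<Rightarrow> (nat \<Rightarrow> nat \<Rightarrow> bool) \<Rightarrow> bool" where
  "loopless n A = (\<forall>i<n. \<not> A i i)"

definition edge_adjacent :: "nat \<Rightarrow> (nat \<Rightarrow> nat \<Rightarrow> bool) \<Rightarrow> (nat \<Rightarrow> nat \<Rightarrow> bool) \<Rightarrow> bool" where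
  "edge_adjacent n A A' =
     (loopless n A \<and> loopless n A' \<and>
      card {(i, j). i < n \<and> j < n \<and> A i j \<noteq> A' i j} = 1)"

text \<open>Edge-level (alpha, eps)-GDP of a node-indexed mechanism M X Y A v (an output distribution):
  for every unlabelled node v (m <= v < n) and every pair of edge-level adjacent datasets
  (same X, Y; adjacency matrices differing in exactly one entry).\<close>

definition edge_GDP ::
  "nat \<Rightarrow> nat \<Rightarrow> real \<Rightarrow> real \<Rightarrow>
   ((nat \<Rightarrow> nat \<Rightarrow> real) \<Rightarrow> (nat \<Rightarrow> nat \<Rightarrow> bool) \<Rightarrow> (nat \<Rightarrow> nat \<Rightarrow> bool) \<Rightarrow> nat \<Rightarrow> 'o measure)
   \<Rightarrow> bool" where
  "edge_GDP n m \<alpha> \<epsilon> M =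
     (\<forall>v X Y A A'. m \<le> v \<and> v < n \<and> edge_adjacent n A A' \<longrightarrow>
        renyi_divergence \<alpha> (M X Y A v) (M X Y A' v) \<le> ereal \<epsilon>)"

text \<open>Measurable spaces: a row is \<open>nat \<Rightarrow> real\<close> (entries j < d meaningful), a matrix is
  \<open>nat \<Rightarrow> nat \<Rightarrow> real\<close> (row, column), the noise is \<open>nat \<Rightarrow> nat \<Rightarrow> nat \<Rightarrow> real\<close> (layer, row, column).\<close>

definition RowS :: "(nat \<Rightarrow> real) measure" where
  "RowS = (\<Pi>\<^sub>M j\<in>UNIV. borel)"

definition MatS :: "(nat \<Rightarrow> nat \<Rightarrow> real) measure" where
  "MatS = (\<Pi>\<^sub>M i\<in>UNIV. RowS)"

definition NoiseS :: "(nat \<Rightarrow> nat \<Rightarrow> nat \<Rightarrow> real) measure" where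
  "NoiseS = (\<Pi>\<^sub>M l\<in>UNIV. MatS)"

definition row_normalize :: "nat \<Rightarrow> (nat \<Rightarrow> real) \<Rightarrow> (nat \<Rightarrow> real)" where
  "row_normalize d h = (\<lambda>j. if j < d then h j / sqrt (\<Sum>k<d. (h k)\<^sup>2) else 0)"

definition gauss_noise :: "nat \<Rightarrow> nat \<Rightarrow> nat \<Rightarrow> real \<Rightarrow> (nat \<Rightarrow> nat \<Rightarrow> nat \<Rightarrow> real) measure" where
  "gauss_noise L n d s =
     distr (\<Pi>\<^sub>M idx\<in>{..<L} \<times> {..<n} \<times> {..<d}. density lborel (normal_density 0 s)) NoiseS
       (\<lambda>N l i j. if l < L \<and> i < n \<and> j < d then N (l, i, j) else 0)"

primrec gap_H ::
  "nat \<Rightarrow> nat \<Rightarrow> ('w \<Rightarrow> (nat \<Rightarrow> real) \<Rightarrow> (nat \<Rightarrow> real)) \<Rightarrow> (nat \<Rightarrow> nat \<Rightarrow> bool) \<Rightarrow>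
   (nat \<Rightarrow> nat \<Rightarrow> real) \<Rightarrow> 'w \<Rightarrow> (nat \<Rightarrow> nat \<Rightarrow> nat \<Rightarrow> real) \<Rightarrow> nat \<Rightarrow> nat \<Rightarrow> nat \<Rightarrow> real" where
  "gap_H n d f A X w N 0 =
     (\<lambda>i. if i < n then row_normalize d (f w (X i)) else (\<lambda>_. 0))"
| "gap_H n d f A X w N (Suc l) =
     (\<lambda>i. if i < n then
            row_normalize d (\<lambda>j. (\<Sum>k<n. (if A i k then 1 else 0) * gap_H n d f A X w N l k j) + N l i j)
          else (\<lambda>_. 0))"

text \<open>Z = H^(0) || ... || H^(L) (an n x (L+1)d matrix).\<close>

definition gap_Z ::
  "nat \<Rightarrow> nat \<Rightarrow> nat \<Rightarrow> ('w \<Rightarrow> (nat \<Rightarrow> real) \<Rightarrow> (nat \<Rightarrow> real)) \<Rightarrow> (nat \<Rightarrow> nat \<Rightarrow> bool) \<Rightarrow>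
   (nat \<Rightarrow> nat \<Rightarrow> real) \<Rightarrow> 'w \<Rightarrow> (nat \<Rightarrow> nat \<Rightarrow> nat \<Rightarrow> real) \<Rightarrow> nat \<Rightarrow> nat \<Rightarrow> real" where
  "gap_Z L n d f A X w N =
     (\<lambda>i c. if i < n \<and> c < (L + 1) * d then gap_H n d f A X w N (c div d) i (c mod d) else 0)"

text \<open>The mechanism M(v; (X, Y, A)) = (g(Theta, Z_v), (W, Theta)), as an output distribution:
  W ~ WX X Y, noise ~ gauss_noise, Theta ~ B Y Z, all independent.\<close>

definition gap_mech ::
  "nat \<Rightarrow> nat \<Rightarrow> nat \<Rightarrow> real \<Rightarrow>
   ((nat \<Rightarrow> nat \<Rightarrow> real) \<Rightarrow> (nat \<Rightarrow> nat \<Rightarrow> bool) \<Rightarrow> 'w measure) \<Rightarrow>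
   ('w \<Rightarrow> (nat \<Rightarrow> real) \<Rightarrow> (nat \<Rightarrow> real)) \<Rightarrow>
   ((nat \<Rightarrow> nat \<Rightarrow> bool) \<Rightarrow> (nat \<Rightarrow> nat \<Rightarrow> real) \<Rightarrow> 't measure) \<Rightarrow>
   ('t \<Rightarrow> (nat \<Rightarrow> real) \<Rightarrow> 'y) \<Rightarrow>
   'w measure \<Rightarrow> 't measure \<Rightarrow> 'y measure \<Rightarrow>
   (nat \<Rightarrow> nat \<Rightarrow> real) \<Rightarrow> (nat \<Rightarrow> nat \<Rightarrow> bool) \<Rightarrow> (nat \<Rightarrow> nat \<Rightarrow> bool) \<Rightarrow> nat \<Rightarrow>
   ('y \<times> ('w \<times> 't)) measure" where
  "gap_mech L n d s WX f B g MW MT MY X Y A v =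
     bind (WX X Y) (\<lambda>w.
       bind (gauss_noise L n d s) (\<lambda>N.
         bind (B Y (gap_Z L n d f A X w N)) (\<lambda>\<theta>.
           return (MY \<Otimes>\<^sub>M (MW \<Otimes>\<^sub>M MT)) (g \<theta> (gap_Z L n d f A X w N v), (w, \<theta>)))))"

end

theory Submission
  imports Defs
begin

lemma young_ennreal:
  fixes \<alpha> a b :: real
  assumes "\<alpha> > 1" "a \<ge> 0" "b \<ge> 0"
  shows "a * b powr (\<alpha> - 1) \<le> a powr \<alpha> / \<alpha> + ((\<alpha> - 1) / \<alpha>) * b powr \<alpha>"
proof -
  define q where "q = \<alpha> / (\<alpha> - 1)"
  have q1: "q > 1" using assms by (simp add: q_def field_simps)
  have pq: "1/\<alpha> + 1/q = 1" using assms by (simp add: q_def field_simps)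
  have "a * b powr (\<alpha> - 1) \<le> a powr \<alpha> / \<alpha> + (b powr (\<alpha> - 1)) powr q / q"
    using Youngs_inequality[OF assms(1) q1 pq assms(2)] by simp
  also have "(b powr (\<alpha> - 1)) powr q = b powr \<alpha>"
    using assms by (simp add: powr_powr q_def)
  also have "b powr \<alpha> / q = ((\<alpha> - 1) / \<alpha>) * b powr \<alpha>" using assms by (simp add: q_def)
  finally show ?thesis .
qed

lemma renyi_dp:
  fixes Q0 :: "'a measure" and \<kappa> :: "'a \<Rightarrow> 'b measure" and r :: "'a \<Rightarrow> real"
  assumes \<alpha>: "\<alpha> > 1"
    and Q0: "prob_space Q0"
    and P0: "prob_space (density Q0 (\<lambda>x. ennreal (r x)))"
    and r_meas[measurable]: "r \<in> borel_measurable Q0"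
    and r_nn: "\<And>x. x \<in> space Q0 \<Longrightarrow> r x \<ge> 0"
    and \<kappa>: "\<kappa> \<in> Q0 \<rightarrow>\<^sub>M prob_algebra \<Omega>"
    and R: "(\<integral>\<^sup>+x. ennreal (r x powr \<alpha>) \<partial>Q0) \<le> ennreal c"
  shows "renyi_divergence \<alpha> (bind (density Q0 (\<lambda>x. ennreal (r x))) \<kappa>) (bind Q0 \<kappa>) \<le> ereal (ln c / (\<alpha> - 1))"
proof -
  define P0 where "P0 = density Q0 (\<lambda>x. ennreal (r x))"
  define P where "P = bind P0 \<kappa>"
  define Q where "Q = bind Q0 \<kappa>"
  interpret Q0: prob_space Q0 by fact
  interpret P0: prob_space P0 using P0 by (simp add: P0_def)
  have sP0: "sets P0 = sets Q0" by (simp add: P0_def)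
  have \<kappa>P: "\<kappa> \<in> P0 \<rightarrow>\<^sub>M prob_algebra \<Omega>" using \<kappa> by (simp add: measurable_cong_sets[OF sP0 refl])
  have \<kappa>s[measurable]: "\<kappa> \<in> Q0 \<rightarrow>\<^sub>M subprob_algebra \<Omega>" using \<kappa> by (rule measurable_prob_algebraD)
  have \<kappa>sP: "\<kappa> \<in> P0 \<rightarrow>\<^sub>M subprob_algebra \<Omega>" using \<kappa>P by (rule measurable_prob_algebraD)
  have Q0sp: "Q0 \<in> space (prob_algebra Q0)" by (simp add: space_prob_algebra Q0.prob_space_axioms)
  have P0sp: "P0 \<in> space (prob_algebra P0)" by (simp add: space_prob_algebra P0.prob_space_axioms)
  have probQ: "prob_space Q" unfolding Q_def by (rule prob_space_bind'[OF Q0sp \<kappa>])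
  have probP: "prob_space P" unfolding P_def by (rule prob_space_bind'[OF P0sp \<kappa>P])
  have sQ: "sets Q = sets \<Omega>" unfolding Q_def by (rule sets_bind'[OF Q0sp \<kappa>])
  have sP: "sets P = sets \<Omega>" unfolding P_def by (rule sets_bind'[OF P0sp \<kappa>P])
  interpret Q: prob_space Q by fact
  interpret P: prob_space P by fact
  have kprob: "\<And>x. x \<in> space Q0 \<Longrightarrow> prob_space (\<kappa> x)"
    using measurable_space[OF \<kappa>] by (simp add: space_prob_algebra)
  have ksets: "\<And>x. x \<in> space Q0 \<Longrightarrow> sets (\<kappa> x) = sets \<Omega>"
    using measurable_space[OF \<kappa>] by (simp add: space_prob_algebra)
  have kE: "\<And>E. E \<in> sets \<Omega> \<Longrightarrow> (\<lambda>x. emeasure (\<kappa> x) E) \<in> borel_measurable Q0"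
    by (rule measurable_compose[OF \<kappa>s measurable_emeasure_subprob_algebra])
  have emQ: "\<And>E. E \<in> sets \<Omega> \<Longrightarrow> emeasure Q E = (\<integral>\<^sup>+x. emeasure (\<kappa> x) E \<partial>Q0)"
    unfolding Q_def by (rule emeasure_bind[OF Q0.not_empty \<kappa>s])
  have emP: "emeasure P E = (\<integral>\<^sup>+x. ennreal (r x) * emeasure (\<kappa> x) E \<partial>Q0)" if E: "E \<in> sets \<Omega>" for E
  proof -
    have "emeasure P E = (\<integral>\<^sup>+x. emeasure (\<kappa> x) E \<partial>P0)"
      unfolding P_def by (rule emeasure_bind[OF P0.not_empty \<kappa>sP E])
    also have "\<dots> = (\<integral>\<^sup>+x. ennreal (r x) * emeasure (\<kappa> x) E \<partial>Q0)"
      unfolding P0_def using kE[OF E] by (subst nn_integral_density) auto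
    finally show ?thesis .
  qed
  have ac: "absolutely_continuous Q P"
    unfolding absolutely_continuous_def
  proof
    fix E assume "E \<in> null_sets Q"
    then have E: "E \<in> sets \<Omega>" and E0: "emeasure Q E = 0" using sQ by auto
    have "AE x in Q0. emeasure (\<kappa> x) E = 0"
      using E0 emQ[OF E] nn_integral_0_iff_AE[OF kE[OF E]] by simp
    then have "(\<integral>\<^sup>+x. ennreal (r x) * emeasure (\<kappa> x) E \<partial>Q0) = (\<integral>\<^sup>+x. 0 \<partial>Q0)"
      by (intro nn_integral_cong_AE) auto
    then have "emeasure P E = 0" using emP[OF E] by simp
    then show "E \<in> null_sets P" using E sP by auto
  qed
  have sPQ: "sets P = sets Q" using sP sQ by simp
  have Pdens: "density Q (RN_deriv Q P) = P" by (rule Q.density_RN_deriv[OF ac sPQ])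
  have fin: "AE x in Q. RN_deriv Q P x \<noteq> \<infinity>"
    by (rule Q.RN_deriv_finite[OF _ ac sPQ]) (rule P.sigma_finite_measure_axioms)
  define u where "u x = enn2real (RN_deriv Q P x)" for x
  have u_meas[measurable]: "u \<in> borel_measurable Q" unfolding u_def by measurable
  have u_nn: "u x \<ge> 0" for x by (simp add: u_def)
  have Pu: "P = density Q (\<lambda>x. ennreal (u x))"
  proof -
    have "density Q (RN_deriv Q P) = density Q (\<lambda>x. ennreal (u x))"
      by (rule density_cong) (use fin in \<open>auto simp: u_def less_top\<close>)
    then show ?thesis using Pdens by simp
  qed
  define R0 where "R0 = (\<integral>\<^sup>+x. ennreal (r x powr \<alpha>) \<partial>Q0)"
  define m where "m k x = min (u x) (real k)" for k :: nat and x
  have m_meas[measurable]: "m k \<in> borel_measurable Q" for k unfolding m_def by measurable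
  have m_meas\<Omega>[measurable]: "m k \<in> borel_measurable \<Omega>" for k
    using m_meas[of k] measurable_cong_sets[OF sQ refl] by blast
  have m_nn: "m k x \<ge> 0" for k x by (simp add: m_def u_nn)
  define Ik where "Ik k = (\<integral>\<^sup>+x. ennreal (m k x powr \<alpha>) \<partial>Q)" for k
  have Ik_bound: "Ik k \<le> ennreal (1/\<alpha>) * R0 + ennreal ((\<alpha>-1)/\<alpha>) * Ik k" for k
  proof -
    have "Ik k \<le> (\<integral>\<^sup>+x. ennreal (u x) * ennreal (m k x powr (\<alpha>-1)) \<partial>Q)"
      unfolding Ik_def
    proof (intro nn_integral_mono)
      fix x
      have "m k x powr \<alpha> = m k x powr (\<alpha>-1) * m k x"
      proof (cases "m k x = 0")
        case False
        have "m k x powr (\<alpha>-1) * m k x = m k x powr (\<alpha>-1) * m k x powr 1"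
          using m_nn[of k x] by simp
        also have "\<dots> = m k x powr \<alpha>" by (subst powr_add[symmetric]) simp
        finally show ?thesis by simp
      qed (use \<alpha> in simp)
      also have "\<dots> \<le> m k x powr (\<alpha>-1) * u x" by (intro mult_left_mono) (auto simp: m_def)
      finally show "ennreal (m k x powr \<alpha>) \<le> ennreal (u x) * ennreal (m k x powr (\<alpha> - 1))"
        by (simp add: ennreal_mult'[symmetric] u_nn mult.commute ennreal_leI)
    qed
    also have "\<dots> = (\<integral>\<^sup>+x. ennreal (m k x powr (\<alpha>-1)) \<partial>P)"
      by (simp add: Pu nn_integral_density)
    also have "\<dots> = (\<integral>\<^sup>+x. \<integral>\<^sup>+y. ennreal (m k y powr (\<alpha>-1)) \<partial>\<kappa> x \<partial>P0)"
      unfolding P_def by (rule nn_integral_bind[OF _ \<kappa>sP]) measurable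
    also have "\<dots> = (\<integral>\<^sup>+x. ennreal (r x) * \<integral>\<^sup>+y. ennreal (m k y powr (\<alpha>-1)) \<partial>\<kappa> x \<partial>Q0)"
      unfolding P0_def by (subst nn_integral_density) measurable
    also have "\<dots> = (\<integral>\<^sup>+x. \<integral>\<^sup>+y. ennreal (r x * m k y powr (\<alpha>-1)) \<partial>\<kappa> x \<partial>Q0)"
      by (intro nn_integral_cong_simp) (auto simp: nn_integral_cmult[symmetric] ennreal_mult' r_nn intro!: nn_integral_cong)
    also have "\<dots> \<le> (\<integral>\<^sup>+x. \<integral>\<^sup>+y. ennreal (r x powr \<alpha> / \<alpha>) + ennreal ((\<alpha>-1)/\<alpha>) * ennreal (m k y powr \<alpha>) \<partial>\<kappa> x \<partial>Q0)"
    proof (intro nn_integral_mono_AE AE_I2 nn_integral_mono)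
      fix x y assume x: "x \<in> space Q0"
      have "r x * m k y powr (\<alpha>-1) \<le> r x powr \<alpha> / \<alpha> + ((\<alpha>-1)/\<alpha>) * m k y powr \<alpha>"
        by (rule young_ennreal[OF \<alpha> r_nn[OF x] m_nn])
      then show "ennreal (r x * m k y powr (\<alpha>-1)) \<le> ennreal (r x powr \<alpha> / \<alpha>) + ennreal ((\<alpha>-1)/\<alpha>) * ennreal (m k y powr \<alpha>)"
        using \<alpha> by (simp add: ennreal_mult'[symmetric] ennreal_plus[symmetric] ennreal_leI del: ennreal_plus)
    qed
    also have "\<dots> = (\<integral>\<^sup>+x. ennreal (r x powr \<alpha> / \<alpha>) + ennreal ((\<alpha>-1)/\<alpha>) * \<integral>\<^sup>+y. ennreal (m k y powr \<alpha>) \<partial>\<kappa> x \<partial>Q0)"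
    proof (intro nn_integral_cong)
      fix x assume x: "x \<in> space Q0"
      interpret K: prob_space "\<kappa> x" using kprob[OF x] .
      have mk0[measurable]: "m k \<in> borel_measurable (\<kappa> x)"
        using m_meas\<Omega>[of k] by (simp add: measurable_cong_sets[OF ksets[OF x] refl])
      have mk: "(\<lambda>y. ennreal (m k y powr \<alpha>)) \<in> borel_measurable (\<kappa> x)"
        by measurable
      show "(\<integral>\<^sup>+y. ennreal (r x powr \<alpha> / \<alpha>) + ennreal ((\<alpha>-1)/\<alpha>) * ennreal (m k y powr \<alpha>) \<partial>\<kappa> x) =
          ennreal (r x powr \<alpha> / \<alpha>) + ennreal ((\<alpha>-1)/\<alpha>) * \<integral>\<^sup>+y. ennreal (m k y powr \<alpha>) \<partial>\<kappa> x"
        using mk by (subst nn_integral_add) (auto simp: nn_integral_cmult K.emeasure_space_1)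
    qed
    also have "\<dots> = (\<integral>\<^sup>+x. ennreal (r x powr \<alpha> / \<alpha>) \<partial>Q0) + ennreal ((\<alpha>-1)/\<alpha>) * (\<integral>\<^sup>+x. \<integral>\<^sup>+y. ennreal (m k y powr \<alpha>) \<partial>\<kappa> x \<partial>Q0)"
      by (subst nn_integral_add) (auto simp: nn_integral_cmult)
    also have "(\<integral>\<^sup>+x. \<integral>\<^sup>+y. ennreal (m k y powr \<alpha>) \<partial>\<kappa> x \<partial>Q0) = Ik k"
      unfolding Ik_def Q_def by (rule nn_integral_bind[symmetric, OF _ \<kappa>s]) measurable
    also have "(\<integral>\<^sup>+x. ennreal (r x powr \<alpha> / \<alpha>) \<partial>Q0) = ennreal (1/\<alpha>) * R0"
      unfolding R0_def using \<alpha>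
      by (subst nn_integral_cmult[symmetric]) (auto simp: ennreal_mult'[symmetric] intro!: nn_integral_cong)
    finally show ?thesis .
  qed
  have R0c: "R0 \<le> ennreal c" using R by (simp add: R0_def)
  have Ik_le: "Ik k \<le> R0" for k
  proof -
    have "Ik k \<le> (\<integral>\<^sup>+x. ennreal (real k powr \<alpha>) \<partial>Q)"
      unfolding Ik_def using \<alpha>
      by (intro nn_integral_mono ennreal_leI powr_mono2) (auto simp: m_def m_nn u_nn)
    also have "\<dots> < top" by (simp add: Q.emeasure_space_1)
    finally have fk: "Ik k < top" .
    have fR: "R0 < top" using R0c by (simp add: le_less_trans)
    define a where "a = enn2real (Ik k)"
    define b where "b = enn2real R0"
    have Ia: "Ik k = ennreal a" using fk by (simp add: a_def)
    have Rb: "R0 = ennreal b" using fR by (simp add: b_def)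
    have a0: "a \<ge> 0" "b \<ge> 0" by (simp_all add: a_def b_def)
    have "ennreal a \<le> ennreal (1/\<alpha> * b + (\<alpha>-1)/\<alpha> * a)"
      using Ik_bound[of k] \<alpha> a0 unfolding Ia Rb
      by (simp add: ennreal_mult'[symmetric] ennreal_plus[symmetric] del: ennreal_plus)
    then have "a \<le> 1/\<alpha> * b + (\<alpha>-1)/\<alpha> * a" using \<alpha> a0 by (subst (asm) ennreal_le_iff) auto
    then have "a * \<alpha> \<le> b + (\<alpha>-1) * a" using \<alpha> by (simp add: field_simps)
    then have "a \<le> b" by (simp add: algebra_simps)
    then show ?thesis using Ia Rb by (simp add: ennreal_leI)
  qed
  define I where "I = (\<integral>\<^sup>+x. ennreal (u x powr \<alpha>) \<partial>Q)"
  have sup_eq: "(SUP k. ennreal (m k x powr \<alpha>)) = ennreal (u x powr \<alpha>)" for x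
  proof (rule antisym)
    show "(SUP k. ennreal (m k x powr \<alpha>)) \<le> ennreal (u x powr \<alpha>)"
      using \<alpha> by (intro SUP_least ennreal_leI powr_mono2) (auto simp: m_def u_nn)
    obtain k :: nat where "u x \<le> real k" using real_arch_simple by blast
    then have "m k x = u x" by (simp add: m_def)
    then show "ennreal (u x powr \<alpha>) \<le> (SUP k. ennreal (m k x powr \<alpha>))"
      by (intro SUP_upper2[of k]) auto
  qed
  have "I = (\<integral>\<^sup>+x. (SUP k. ennreal (m k x powr \<alpha>)) \<partial>Q)" unfolding I_def sup_eq ..
  also have "\<dots> = (SUP k. Ik k)" unfolding Ik_def
  proof (rule nn_integral_monotone_convergence_SUP)
    show "incseq (\<lambda>k x. ennreal (m k x powr \<alpha>))"
      using \<alpha> by (auto simp: incseq_def le_fun_def m_def u_nn intro!: ennreal_leI powr_mono2)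
  qed measurable
  also have "\<dots> \<le> R0" by (intro SUP_least Ik_le)
  finally have IR: "I \<le> R0" .
  have I_pos: "I \<noteq> 0"
  proof
    assume "I = 0"
    then have "AE x in Q. ennreal (u x powr \<alpha>) = 0"
      unfolding I_def by (subst nn_integral_0_iff_AE[symmetric]) auto
    then have "AE x in Q. ennreal (u x) = 0"
      by eventually_elim (use u_nn in auto)
    then have "(\<integral>\<^sup>+x. ennreal (u x) \<partial>Q) = 0" by (simp add: nn_integral_0_iff_AE)
    then have "emeasure P (space P) = 0" unfolding Pu by (simp add: emeasure_density)
    then show False using P.emeasure_space_1 by simp
  qed
  have RI: "renyi_integral \<alpha> P Q = I" unfolding renyi_integral_def I_def u_def ..
  have Ifin: "I \<noteq> \<infinity>" using IR R0c by (auto simp: top_unique)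
  have Ic: "enn2real I \<le> c"
  proof -
    have "I \<le> ennreal c" using IR R0c by simp
    with I_pos have c0: "c > 0" by (cases "c > 0") (auto simp: ennreal_neg)
    show ?thesis using \<open>I \<le> ennreal c\<close> c0 Ifin by (metis enn2real_ennreal enn2real_mono ennreal_less_top less_le)
  qed
  have Ipos: "enn2real I > 0" using I_pos Ifin
    by (auto simp: enn2real_positive_iff top.not_eq_extremum zero_less_iff_neq_zero)
  have "ln (enn2real I) / (\<alpha> - 1) \<le> ln c / (\<alpha> - 1)"
    using Ic Ipos \<alpha> by (intro divide_right_mono) auto
  then show ?thesis
    unfolding P_def[symmetric] P0_def[symmetric] Q_def[symmetric]
    unfolding renyi_divergence_def RI using sPQ ac Ifin by simp
qed

definition Nrm :: "real \<Rightarrow> real measure" where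
  "Nrm s = density lborel (normal_density 0 s)"

definition ratio :: "real \<Rightarrow> real \<Rightarrow> real \<Rightarrow> real" where
  "ratio s b y = normal_density b s y / normal_density 0 s y"

lemma sets_Nrm[simp, measurable_cong]: "sets (Nrm s) = sets borel"
  by (simp add: Nrm_def)

lemma space_Nrm[simp]: "space (Nrm s) = UNIV"
  by (simp add: Nrm_def)

lemma prob_Nrm: "s > 0 \<Longrightarrow> prob_space (Nrm s)"
  unfolding Nrm_def by (rule prob_space_normal_density)

lemma ratio_meas[measurable]: "(\<lambda>y. ratio s b y) \<in> borel_measurable borel"
  unfolding ratio_def by measurable

lemma ratio_pos: "s > 0 \<Longrightarrow> ratio s b y > 0"
  unfolding ratio_def by (simp add: normal_density_pos)

lemma nn_integral_shift:
  fixes b :: real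
  assumes [measurable]: "g \<in> borel_measurable borel"
  shows "(\<integral>\<^sup>+y. g (y + b) \<partial>lborel) = (\<integral>\<^sup>+y. g y \<partial>lborel)"
proof -
  have "(\<integral>\<^sup>+y. g y \<partial>lborel) = (\<integral>\<^sup>+y. g y \<partial>distr lborel borel ((+) b))"
    by (simp add: lborel_distr_plus)
  also have "\<dots> = (\<integral>\<^sup>+y. g (b + y) \<partial>lborel)"
    by (rule nn_integral_distr) auto
  finally show ?thesis by (simp add: add.commute)
qed

lemma nd_shift_eq: "normal_density b s (z + b) = normal_density 0 s z"
  unfolding normal_density_def by simp

lemma nd_shift:
  assumes "s > 0"
  shows "distr (Nrm s) borel (\<lambda>y. y + b) = density lborel (normal_density b s)"
proof (rule measure_eqI)
  fix A assume A: "A \<in> sets (distr (Nrm s) borel (\<lambda>y. y + b))"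
  then have [measurable]: "A \<in> sets borel" by simp
  have "emeasure (distr (Nrm s) borel (\<lambda>y. y + b)) A = (\<integral>\<^sup>+y. ennreal (normal_density 0 s y) * indicator A (y + b) \<partial>lborel)"
  proof -
    have "emeasure (distr (Nrm s) borel (\<lambda>y. y + b)) A = emeasure (Nrm s) ((\<lambda>y. y + b) -` A \<inter> space (Nrm s))"
      by (rule emeasure_distr) auto
    also have "\<dots> = (\<integral>\<^sup>+y. ennreal (normal_density 0 s y) * indicator ((\<lambda>y. y + b) -` A) y \<partial>lborel)"
      unfolding Nrm_def using measurable_sets[of "\<lambda>y::real. y + b" borel borel A] by (subst emeasure_density) auto
    finally show ?thesis by (simp add: indicator_def)
  qed
  also have "\<dots> = (\<integral>\<^sup>+y. ennreal (normal_density b s (y + b)) * indicator A (y + b) \<partial>lborel)"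
    by (simp add: nd_shift_eq)
  also have "\<dots> = (\<integral>\<^sup>+y. ennreal (normal_density b s y) * indicator A y \<partial>lborel)"
    by (rule nn_integral_shift[where g="\<lambda>y. ennreal (normal_density b s y) * indicator A y"]) measurable
  also have "\<dots> = emeasure (density lborel (normal_density b s)) A"
    by (simp add: emeasure_density)
  finally show "emeasure (distr (Nrm s) borel (\<lambda>y. y + b)) A = emeasure (density lborel (normal_density b s)) A" .
qed simp

lemma nd_dens:
  assumes "s > 0"
  shows "density (Nrm s) (\<lambda>y. ennreal (ratio s b y)) = density lborel (normal_density b s)"
  unfolding Nrm_def
proof (subst density_density_eq)
  show "density lborel (\<lambda>x. ennreal (normal_density 0 s x) * ennreal (ratio s b x)) = density lborel (normal_density b s)"
  proof (rule density_cong)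
    show "AE x in lborel. ennreal (normal_density 0 s x) * ennreal (ratio s b x) = ennreal (normal_density b s x)"
    proof (rule AE_I2)
      fix x
      have "normal_density 0 s x > 0" by (rule normal_density_pos[OF assms])
      then show "ennreal (normal_density 0 s x) * ennreal (ratio s b x) = ennreal (normal_density b s x)"
        by (simp add: ennreal_mult'[symmetric] ratio_def)
    qed
  qed auto
qed auto

lemma ratio_exp:
  assumes "s > 0"
  shows "ratio s b y = exp ((2*b*y - b\<^sup>2 ) / (2* s\<^sup>2))"
proof -
  have "ratio s b y = exp (-(y - b)\<^sup>2/ (2 * s\<^sup>2)) / exp (-(y - 0)\<^sup>2/ (2 * s\<^sup>2))"
    unfolding ratio_def normal_density_def using assms by simp
  also have "\<dots> = exp (-(y - b)\<^sup>2/ (2 * s\<^sup>2) - (-(y - 0)\<^sup>2/ (2 * s\<^sup>2)))"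
    by (rule exp_diff[symmetric])
  also have "-(y - b)\<^sup>2/ (2 * s\<^sup>2) - (-(y - 0)\<^sup>2/ (2 * s\<^sup>2)) = (2*b*y - b\<^sup>2 ) / (2* s\<^sup>2)"
    using assms by (simp add: field_simps power2_eq_square)
  finally show ?thesis .
qed

lemma nd_pow_eq:
  assumes "s > 0"
  shows "normal_density 0 s y * ratio s b y powr \<alpha> = exp (\<alpha>*(\<alpha>-1)* b\<^sup>2/(2* s\<^sup>2)) * normal_density (\<alpha>*b) s y"
proof -
  have "ratio s b y powr \<alpha> = exp (\<alpha> * ((2*b*y - b\<^sup>2 ) / (2* s\<^sup>2)))"
    by (simp add: ratio_exp[OF assms] powr_def)
  then have "normal_density 0 s y * ratio s b y powr \<alpha> =
     1 / sqrt (2 * pi * s\<^sup>2) * (exp (-(y - 0)\<^sup>2/ (2 * s\<^sup>2)) * exp (\<alpha> * ((2*b*y - b\<^sup>2 ) / (2* s\<^sup>2))))"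
    unfolding normal_density_def by simp
  also have "exp (-(y - 0)\<^sup>2/ (2 * s\<^sup>2)) * exp (\<alpha> * ((2*b*y - b\<^sup>2 ) / (2* s\<^sup>2))) =
      exp (\<alpha>*(\<alpha>-1)* b\<^sup>2/(2* s\<^sup>2)) * exp (-(y - \<alpha>*b)\<^sup>2/ (2 * s\<^sup>2))"
  proof -
    have "-(y - 0)\<^sup>2/ (2 * s\<^sup>2) + \<alpha> * ((2*b*y - b\<^sup>2 ) / (2* s\<^sup>2)) =
        \<alpha>*(\<alpha>-1)* b\<^sup>2/(2* s\<^sup>2) + -(y - \<alpha>*b)\<^sup>2/ (2 * s\<^sup>2)"
      using assms by (simp add: field_simps power2_eq_square)
    then show ?thesis by (simp add: exp_add[symmetric])
  qed
  finally show ?thesis unfolding normal_density_def by simp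
qed

lemma nd_renyi:
  assumes "s > 0"
  shows "(\<integral>\<^sup>+y. ennreal (ratio s b y powr \<alpha>) \<partial>Nrm s) = ennreal (exp (\<alpha>*(\<alpha>-1)* b\<^sup>2/(2* s\<^sup>2)))"
proof -
  have "(\<integral>\<^sup>+y. ennreal (ratio s b y powr \<alpha>) \<partial>Nrm s) =
      (\<integral>\<^sup>+y. ennreal (normal_density 0 s y) * ennreal (ratio s b y powr \<alpha>) \<partial>lborel)"
    unfolding Nrm_def by (subst nn_integral_density) auto
  also have "\<dots> = (\<integral>\<^sup>+y. ennreal (exp (\<alpha>*(\<alpha>-1)* b\<^sup>2/(2* s\<^sup>2))) * ennreal (normal_density (\<alpha>*b) s y) \<partial>lborel)"
    by (intro nn_integral_cong) (simp add: ennreal_mult'[symmetric] nd_pow_eq[OF assms])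
  also have "\<dots> = ennreal (exp (\<alpha>*(\<alpha>-1)* b\<^sup>2/(2* s\<^sup>2))) * (\<integral>\<^sup>+y. ennreal (normal_density (\<alpha>*b) s y) \<partial>lborel)"
    by (rule nn_integral_cmult) measurable
  also have "(\<integral>\<^sup>+y. ennreal (normal_density (\<alpha>*b) s y) \<partial>lborel) = 1"
  proof -
    interpret prob_space "density lborel (normal_density (\<alpha>*b) s)" using assms by (rule prob_space_normal_density)
    show ?thesis using emeasure_space_1 by (simp add: emeasure_density)
  qed
  finally show ?thesis by simp
qed

lemma indicator_PiE_prod:
  assumes "y \<in> extensional J" "finite J"
  shows "indicator (Pi\<^sub>E J A) y = (\<Prod>c\<in>J. indicator (A c) (y c) :: ennreal)"
proof (cases "\<forall>c\<in>J. y c \<in> A c")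
  case True
  then show ?thesis using assms by (simp add: PiE_iff)
next
  case False
  then obtain c where c: "c \<in> J" "y c \<notin> A c" by auto
  then have "y \<notin> Pi\<^sub>E J A" by (auto simp: PiE_iff)
  moreover have "(\<Prod>c\<in>J. indicator (A c) (y c) :: ennreal) = 0"
    using c assms(2) by (intro prod_zero) (auto intro!: bexI[of _ c])
  ultimately show ?thesis by simp
qed

lemma gauss_renyi:
  fixes J :: "'i set"
  assumes J: "finite J" and s: "s > 0"
  shows "(\<integral>\<^sup>+y. ennreal ((\<Prod>c\<in>J. ratio s (a c) (y c)) powr \<alpha>) \<partial>PiM J (\<lambda>_. Nrm s))
       = ennreal (exp (\<alpha>*(\<alpha>-1)*(\<Sum>c\<in>J. (a c)\<^sup>2) / (2 * s\<^sup>2)))"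
proof -
  interpret P: product_prob_space "\<lambda>_::'i. Nrm s" by (rule product_prob_spaceI) (rule prob_Nrm[OF s])
  have "(\<integral>\<^sup>+y. ennreal ((\<Prod>c\<in>J. ratio s (a c) (y c)) powr \<alpha>) \<partial>PiM J (\<lambda>_. Nrm s))
      = (\<integral>\<^sup>+y. (\<Prod>c\<in>J. ennreal (ratio s (a c) (y c) powr \<alpha>)) \<partial>PiM J (\<lambda>_. Nrm s))"
    by (intro nn_integral_cong) (simp add: prod_powr_distrib prod_ennreal)
  also have "\<dots> = (\<Prod>c\<in>J. \<integral>\<^sup>+t. ennreal (ratio s (a c) t powr \<alpha>) \<partial>Nrm s)"
    by (rule P.product_nn_integral_prod[OF J]) measurable
  also have "\<dots> = (\<Prod>c\<in>J. ennreal (exp (\<alpha>*(\<alpha>-1)* (a c)\<^sup>2 / (2 * s\<^sup>2))))"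
    by (simp add: nd_renyi[OF s])
  also have "\<dots> = ennreal (\<Prod>c\<in>J. exp (\<alpha>*(\<alpha>-1)* (a c)\<^sup>2 / (2 * s\<^sup>2)))"
    by (simp add: prod_ennreal)
  also have "(\<Prod>c\<in>J. exp (\<alpha>*(\<alpha>-1)* (a c)\<^sup>2 / (2 * s\<^sup>2))) = exp (\<Sum>c\<in>J. \<alpha>*(\<alpha>-1)* (a c)\<^sup>2 / (2 * s\<^sup>2))"
    by (simp add: exp_sum J)
  also have "(\<Sum>c\<in>J. \<alpha>*(\<alpha>-1)* (a c)\<^sup>2 / (2 * s\<^sup>2)) = \<alpha>*(\<alpha>-1)*(\<Sum>c\<in>J. (a c)\<^sup>2) / (2 * s\<^sup>2)"
    by (simp add: sum_divide_distrib sum_distrib_left)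
  finally show ?thesis .
qed

lemma gauss_shift:
  fixes J :: "'i set"
  assumes J: "finite J" and s: "s > 0"
  shows "distr (PiM J (\<lambda>_. Nrm s)) (PiM J (\<lambda>_. Nrm s)) (\<lambda>y. restrict (\<lambda>c. y c + a c) J)
       = density (PiM J (\<lambda>_. Nrm s)) (\<lambda>y. ennreal (\<Prod>c\<in>J. ratio s (a c) (y c)))"
proof -
  define M' where "M' c = density lborel (normal_density (a c) s)" for c
  interpret P: product_prob_space "\<lambda>_::'i. Nrm s" by (rule product_prob_spaceI) (rule prob_Nrm[OF s])
  interpret P': product_prob_space M' by (rule product_prob_spaceI) (simp add: M'_def prob_space_normal_density s)
  have sM': "sets (M' c) = sets borel" for c by (simp add: M'_def)
  have sPi: "sets (PiM J M') = sets (PiM J (\<lambda>_. Nrm s))"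
    by (intro sets_PiM_cong) (auto simp: sM')
  have meas_sh[measurable]: "(\<lambda>y. restrict (\<lambda>c. y c + a c) J) \<in> PiM J (\<lambda>_. Nrm s) \<rightarrow>\<^sub>M PiM J (\<lambda>_. Nrm s)"
    by (intro measurable_restrict) auto
  have "distr (PiM J (\<lambda>_. Nrm s)) (PiM J (\<lambda>_. Nrm s)) (\<lambda>y. restrict (\<lambda>c. y c + a c) J) = PiM J M'"
  proof (rule P'.PiM_eqI[OF J])
    show "sets (distr (PiM J (\<lambda>_. Nrm s)) (PiM J (\<lambda>_. Nrm s)) (\<lambda>y. restrict (\<lambda>c. y c + a c) J)) = sets (PiM J M')"
      using sPi by simp
  next
    fix A assume A: "\<And>c. c \<in> J \<Longrightarrow> A c \<in> sets (M' c)"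
    then have A': "\<And>c. c \<in> J \<Longrightarrow> A c \<in> sets borel" by (simp add: sM')
    have pre: "(\<lambda>y. restrict (\<lambda>c. y c + a c) J) -` Pi\<^sub>E J A \<inter> space (PiM J (\<lambda>_. Nrm s))
        = Pi\<^sub>E J (\<lambda>c. (\<lambda>t. t + a c) -` A c)"
      by (auto simp: space_PiM PiE_iff)
    have "emeasure (distr (PiM J (\<lambda>_. Nrm s)) (PiM J (\<lambda>_. Nrm s)) (\<lambda>y. restrict (\<lambda>c. y c + a c) J)) (Pi\<^sub>E J A)
        = emeasure (PiM J (\<lambda>_. Nrm s)) (Pi\<^sub>E J (\<lambda>c. (\<lambda>t. t + a c) -` A c))"
      using A' by (subst emeasure_distr) (auto intro!: sets_PiM_I_finite J simp: pre)
    also have "\<dots> = (\<Prod>c\<in>J. emeasure (Nrm s) ((\<lambda>t. t + a c) -` A c))"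
    proof (rule P.emeasure_PiM[OF J])
      fix c assume "c \<in> J"
      then show "(\<lambda>t. t + a c) -` A c \<in> sets (Nrm s)"
        using measurable_sets[of "\<lambda>t::real. t + a c" borel borel "A c"] A' by simp
    qed
    also have "\<dots> = (\<Prod>c\<in>J. emeasure (M' c) (A c))"
    proof (intro prod.cong refl)
      fix c assume c: "c \<in> J"
      have "emeasure (Nrm s) ((\<lambda>t. t + a c) -` A c) = emeasure (distr (Nrm s) borel (\<lambda>t. t + a c)) (A c)"
        using A'[OF c] by (subst emeasure_distr) auto
      then show "emeasure (Nrm s) ((\<lambda>t. t + a c) -` A c) = emeasure (M' c) (A c)"
        by (simp add: nd_shift[OF s] M'_def)
    qed
    finally show "emeasure (distr (PiM J (\<lambda>_. Nrm s)) (PiM J (\<lambda>_. Nrm s)) (\<lambda>y. restrict (\<lambda>c. y c + a c) J)) (Pi\<^sub>E J A)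
        = (\<Prod>c\<in>J. emeasure (M' c) (A c))" .
  qed
  also have "PiM J M' = density (PiM J (\<lambda>_. Nrm s)) (\<lambda>y. ennreal (\<Prod>c\<in>J. ratio s (a c) (y c)))"
  proof (rule P'.PiM_eqI[OF J, symmetric])
    show "sets (density (PiM J (\<lambda>_. Nrm s)) (\<lambda>y. ennreal (\<Prod>c\<in>J. ratio s (a c) (y c)))) = sets (PiM J M')"
      using sPi by simp
  next
    fix A assume A: "\<And>c. c \<in> J \<Longrightarrow> A c \<in> sets (M' c)"
    then have A'[measurable]: "\<And>c. c \<in> J \<Longrightarrow> A c \<in> sets borel" by (simp add: sM')
    have "emeasure (density (PiM J (\<lambda>_. Nrm s)) (\<lambda>y. ennreal (\<Prod>c\<in>J. ratio s (a c) (y c)))) (Pi\<^sub>E J A)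
        = (\<integral>\<^sup>+y. ennreal (\<Prod>c\<in>J. ratio s (a c) (y c)) * indicator (Pi\<^sub>E J A) y \<partial>PiM J (\<lambda>_. Nrm s))"
      using A' by (subst emeasure_density) (auto intro!: sets_PiM_I_finite J)
    also have "\<dots> = (\<integral>\<^sup>+y. (\<Prod>c\<in>J. ennreal (ratio s (a c) (y c)) * indicator (A c) (y c)) \<partial>PiM J (\<lambda>_. Nrm s))"
    proof (intro nn_integral_cong)
      fix y assume "y \<in> space (PiM J (\<lambda>_. Nrm s))"
      then have "y \<in> extensional J" by (simp add: space_PiM PiE_def)
      then show "ennreal (\<Prod>c\<in>J. ratio s (a c) (y c)) * indicator (Pi\<^sub>E J A) y
          = (\<Prod>c\<in>J. ennreal (ratio s (a c) (y c)) * indicator (A c) (y c))"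
        using ratio_pos[OF s] by (simp add: indicator_PiE_prod[OF _ J] prod.distrib prod_ennreal less_imp_le)
    qed
    also have "\<dots> = (\<Prod>c\<in>J. \<integral>\<^sup>+t. ennreal (ratio s (a c) t) * indicator (A c) t \<partial>Nrm s)"
      by (rule P.product_nn_integral_prod[OF J]) measurable
    also have "\<dots> = (\<Prod>c\<in>J. emeasure (M' c) (A c))"
    proof (intro prod.cong refl)
      fix c assume c: "c \<in> J"
      have "(\<integral>\<^sup>+t. ennreal (ratio s (a c) t) * indicator (A c) t \<partial>Nrm s) = emeasure (density (Nrm s) (\<lambda>t. ennreal (ratio s (a c) t))) (A c)"
        using A'[OF c] by (subst emeasure_density) auto
      then show "(\<integral>\<^sup>+t. ennreal (ratio s (a c) t) * indicator (A c) t \<partial>Nrm s) = emeasure (M' c) (A c)"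
        by (simp add: nd_dens[OF s] M'_def)
    qed
    finally show "emeasure (density (PiM J (\<lambda>_. Nrm s)) (\<lambda>y. ennreal (\<Prod>c\<in>J. ratio s (a c) (y c)))) (Pi\<^sub>E J A)
        = (\<Prod>c\<in>J. emeasure (M' c) (A c))" .
  qed
  finally show ?thesis .
qed

lemma shear:
  fixes \<mu> :: "'a measure" and \<Lambda> :: "'b measure"
  assumes \<Lambda>: "sigma_finite_measure \<Lambda>"
    and T_meas[measurable]: "(\<lambda>(x,y). T x y) \<in> \<mu> \<Otimes>\<^sub>M \<Lambda> \<rightarrow>\<^sub>M \<Lambda>"
    and Q_meas[measurable]: "(\<lambda>(x,y). Q x y) \<in> borel_measurable (\<mu> \<Otimes>\<^sub>M \<Lambda>)"
    and eq: "\<And>x. x \<in> space \<mu> \<Longrightarrow> distr \<Lambda> \<Lambda> (T x) = density \<Lambda> (Q x)"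
  shows "distr (\<mu> \<Otimes>\<^sub>M \<Lambda>) (\<mu> \<Otimes>\<^sub>M \<Lambda>) (\<lambda>(x,y). (x, T x y)) = density (\<mu> \<Otimes>\<^sub>M \<Lambda>) (\<lambda>(x,y). Q x y)"
proof (rule measure_eqI)
  interpret \<Lambda>: sigma_finite_measure \<Lambda> by fact
  have F[measurable]: "(\<lambda>(x,y). (x, T x y)) \<in> \<mu> \<Otimes>\<^sub>M \<Lambda> \<rightarrow>\<^sub>M \<mu> \<Otimes>\<^sub>M \<Lambda>"
    by measurable
  fix E assume "E \<in> sets (distr (\<mu> \<Otimes>\<^sub>M \<Lambda>) (\<mu> \<Otimes>\<^sub>M \<Lambda>) (\<lambda>(x,y). (x, T x y)))"
  then have E[measurable]: "E \<in> sets (\<mu> \<Otimes>\<^sub>M \<Lambda>)" by simp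
  have Tx: "T x \<in> \<Lambda> \<rightarrow>\<^sub>M \<Lambda>" if x: "x \<in> space \<mu>" for x
    using measurable_Pair2[OF T_meas x] by (simp only: prod.case)
  have Qx: "Q x \<in> borel_measurable \<Lambda>" if x: "x \<in> space \<mu>" for x
    using measurable_Pair2[OF Q_meas x] by (simp only: prod.case)
  have "emeasure (distr (\<mu> \<Otimes>\<^sub>M \<Lambda>) (\<mu> \<Otimes>\<^sub>M \<Lambda>) (\<lambda>(x,y). (x, T x y))) E
      = (\<integral>\<^sup>+z. indicator E z \<partial>distr (\<mu> \<Otimes>\<^sub>M \<Lambda>) (\<mu> \<Otimes>\<^sub>M \<Lambda>) (\<lambda>(x,y). (x, T x y)))"
    by (rule nn_integral_indicator[symmetric]) simp
  also have "\<dots> = (\<integral>\<^sup>+z. indicator E (case z of (x,y) \<Rightarrow> (x, T x y)) \<partial>(\<mu> \<Otimes>\<^sub>M \<Lambda>))"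
    by (rule nn_integral_distr) measurable
  also have "\<dots> = (\<integral>\<^sup>+x. \<integral>\<^sup>+y. indicator E (x, T x y) \<partial>\<Lambda> \<partial>\<mu>)"
    proof -
      have m: "(\<lambda>z. indicator E (case z of (x,y) \<Rightarrow> (x, T x y)) :: ennreal) \<in> borel_measurable (\<mu> \<Otimes>\<^sub>M \<Lambda>)"
        by measurable
      show ?thesis using \<Lambda>.nn_integral_fst[OF m] by (simp only: prod.case)
    qed
  also have "\<dots> = (\<integral>\<^sup>+x. \<integral>\<^sup>+y. indicator E (x, y) \<partial>distr \<Lambda> \<Lambda> (T x) \<partial>\<mu>)"
  proof (intro nn_integral_cong)
    fix x assume x: "x \<in> space \<mu>"
    show "(\<integral>\<^sup>+y. indicator E (x, T x y) \<partial>\<Lambda>) = (\<integral>\<^sup>+y. indicator E (x, y) \<partial>distr \<Lambda> \<Lambda> (T x))"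
      proof -
        have m: "(\<lambda>y. indicator E (x, y) :: ennreal) \<in> borel_measurable \<Lambda>" using x by measurable
        then have m': "(\<lambda>y. indicator E (x, y) :: ennreal) \<in> borel_measurable (distr \<Lambda> \<Lambda> (T x))"
          by (simp only: measurable_distr_eq1)
        show ?thesis by (rule nn_integral_distr[OF Tx[OF x] m', symmetric])
      qed
  qed
  also have "\<dots> = (\<integral>\<^sup>+x. \<integral>\<^sup>+y. Q x y * indicator E (x, y) \<partial>\<Lambda> \<partial>\<mu>)"
  proof (intro nn_integral_cong)
    fix x assume x: "x \<in> space \<mu>"
    show "(\<integral>\<^sup>+y. indicator E (x, y) \<partial>distr \<Lambda> \<Lambda> (T x)) = (\<integral>\<^sup>+y. Q x y * indicator E (x, y) \<partial>\<Lambda>)"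
      using x Qx[OF x] by (simp add: eq nn_integral_density)
  qed
  also have "\<dots> = (\<integral>\<^sup>+z. (case z of (x,y) \<Rightarrow> Q x y) * indicator E z \<partial>(\<mu> \<Otimes>\<^sub>M \<Lambda>))"
    proof -
      have m: "(\<lambda>z. (case z of (x,y) \<Rightarrow> Q x y) * indicator E z :: ennreal) \<in> borel_measurable (\<mu> \<Otimes>\<^sub>M \<Lambda>)"
        by measurable
      show ?thesis using \<Lambda>.nn_integral_fst[OF m] by (simp only: prod.case)
    qed
  also have "\<dots> = emeasure (density (\<mu> \<Otimes>\<^sub>M \<Lambda>) (\<lambda>(x,y). Q x y)) E"
    by (rule emeasure_density[symmetric]) measurable
  finally show "emeasure (distr (\<mu> \<Otimes>\<^sub>M \<Lambda>) (\<mu> \<Otimes>\<^sub>M \<Lambda>) (\<lambda>(x,y). (x, T x y))) E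
      = emeasure (density (\<mu> \<Otimes>\<^sub>M \<Lambda>) (\<lambda>(x,y). Q x y)) E" .
qed (simp only: sets_distr sets_density)

lemma row_normalize_cong:
  "(\<And>j. j < d \<Longrightarrow> h j = h' j) \<Longrightarrow> row_normalize d h = row_normalize d h'"
  unfolding row_normalize_def by (intro ext) (auto intro!: sum.cong)

lemma row_normalize_norm: "(\<Sum>j<d. (row_normalize d h j)\<^sup>2) \<le> 1"
proof -
  define S where "S = (\<Sum>k<d. (h k)\<^sup>2)"
  have S0: "S \<ge> 0" unfolding S_def by (intro sum_nonneg) auto
  have "(\<Sum>j<d. (row_normalize d h j)\<^sup>2) = (\<Sum>j<d. (h j)\<^sup>2 / S)"
    unfolding row_normalize_def S_def[symmetric] using S0
    by (intro sum.cong) (auto simp: power_divide)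
  also have "\<dots> = S / S" unfolding S_def by (rule sum_divide_distrib[symmetric])
  also have "\<dots> \<le> 1" by (cases "S = 0") auto
  finally show ?thesis .
qed

lemma gap_H_dep:
  assumes "\<And>l' i j. l' < l \<Longrightarrow> i < n \<Longrightarrow> j < d \<Longrightarrow> N l' i j = N' l' i j"
  shows "gap_H n d f A X w N l = gap_H n d f A X w N' l"
  using assms
proof (induction l)
  case 0
  then show ?case by simp
next
  case (Suc l)
  have IH: "gap_H n d f A X w N l = gap_H n d f A X w N' l"
    using Suc by auto
  have "row_normalize d (\<lambda>j. (\<Sum>k<n. (if A i k then 1 else 0) * gap_H n d f A X w N' l k j) + N l i j)
      = row_normalize d (\<lambda>j. (\<Sum>k<n. (if A i k then 1 else 0) * gap_H n d f A X w N' l k j) + N' l i j)"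
    if "i < n" for i
    using that by (intro row_normalize_cong) (simp add: Suc.prems)
  then show ?case
    by (intro ext) (simp add: IH)
qed

lemma gap_H_row_norm:
  assumes "k < n"
  shows "(\<Sum>j<d. (gap_H n d f A X w N l k j)\<^sup>2) \<le> 1"
  using assms by (cases l) (simp_all add: row_normalize_norm)

lemma gap_H_meas:
  assumes fW: "\<And>i j. (\<lambda>\<omega>. f (W \<omega>) (X i) j) \<in> borel_measurable M"
    and FN: "\<And>l i j. (\<lambda>\<omega>. F \<omega> l i j) \<in> borel_measurable M"
  shows "(\<lambda>\<omega>. gap_H n d f A X (W \<omega>) (F \<omega>) l i j) \<in> borel_measurable M"
proof (induction l arbitrary: i j)
  case 0
  note fW[measurable]
  show ?case
    by (cases "i < n") (simp_all add: row_normalize_def)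
next
  case (Suc l)
  note Suc[measurable] FN[measurable]
  show ?case
    by (cases "i < n") (simp_all add: row_normalize_def)
qed

locale gap_pair =
  fixes n d :: nat and f :: "'w \<Rightarrow> (nat \<Rightarrow> real) \<Rightarrow> nat \<Rightarrow> real" and X :: "nat \<Rightarrow> nat \<Rightarrow> real"
    and A A' :: "nat \<Rightarrow> nat \<Rightarrow> bool" and i0 k0 :: nat and s :: real
  assumes i0: "i0 < n" and k0: "k0 < n" and s: "s > 0"
    and same: "\<And>i k. i < n \<Longrightarrow> k < n \<Longrightarrow> (i, k) \<noteq> (i0, k0) \<Longrightarrow> A i k = A' i k"
begin

definition \<delta> :: real where "\<delta> = (if A i0 k0 then 1 else 0) - (if A' i0 k0 then 1 else 0)"

lemma \<delta>_sq: "\<delta>\<^sup>2 \<le> 1"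
  unfolding \<delta>_def by auto

lemma adj_sum:
  assumes i: "i < n"
  shows "(\<Sum>k<n. (if A i k then 1 else 0) * h k) =
         (\<Sum>k<n. (if A' i k then 1 else 0) * h k) + (if i = i0 then \<delta> * h k0 else 0)"
proof -
  have "(\<Sum>k<n. (if A i k then 1 else 0) * h k) - (\<Sum>k<n. (if A' i k then 1 else 0) * h k)
      = (\<Sum>k<n. ((if A i k then 1 else 0) - (if A' i k then 1 else 0)) * h k)"
    by (simp add: sum_subtractf left_diff_distrib)
  also have "\<dots> = (\<Sum>k<n. (if k = k0 then (if i = i0 then \<delta> * h k0 else 0) else 0))"
  proof (intro sum.cong refl)
    fix k assume k: "k \<in> {..<n}"
    show "((if A i k then 1 else 0) - (if A' i k then 1 else 0)) * h k = (if k = k0 then (if i = i0 then \<delta> * h k0 else 0) else 0)"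
      using same[of i k] i k by (auto simp: \<delta>_def)
  qed
  also have "\<dots> = (if i = i0 then \<delta> * h k0 else 0)"
    using k0 by (simp add: sum.delta)
  finally show ?thesis by simp
qed

lemma key:
  assumes N': "\<And>l i j. l < K \<Longrightarrow> i < n \<Longrightarrow> j < d \<Longrightarrow>
      N' l i j = N l i j + (if i = i0 then \<delta> * gap_H n d f A X w N l k0 j else 0)"
  shows "l \<le> K \<Longrightarrow> gap_H n d f A' X w N' l = gap_H n d f A X w N l"
proof (induction l)
  case 0
  then show ?case by simp
next
  case (Suc l)
  then have IH: "gap_H n d f A' X w N' l = gap_H n d f A X w N l" by simp
  have lK: "l < K" using Suc by simp
  have "row_normalize d (\<lambda>j. (\<Sum>k<n. (if A' i k then 1 else 0) * gap_H n d f A X w N l k j) + N' l i j)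
      = row_normalize d (\<lambda>j. (\<Sum>k<n. (if A i k then 1 else 0) * gap_H n d f A X w N l k j) + N l i j)"
    if i: "i < n" for i
  proof (intro row_normalize_cong)
    fix j assume j: "j < d"
    show "(\<Sum>k<n. (if A' i k then 1 else 0) * gap_H n d f A X w N l k j) + N' l i j
        = (\<Sum>k<n. (if A i k then 1 else 0) * gap_H n d f A X w N l k j) + N l i j"
      using adj_sum[OF i, of "\<lambda>k. gap_H n d f A X w N l k j"] N'[OF lK i j] by simp
  qed
  then show ?case by (intro ext) (simp add: IH)
qed

definition I :: "nat \<Rightarrow> (nat \<times> nat \<times> nat) set" where
  "I k = {..<k} \<times> {..<n} \<times> {..<d}"

definition Jl :: "nat \<Rightarrow> (nat \<times> nat \<times> nat) set" where
  "Jl k = {k} \<times> {..<n} \<times> {..<d}"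

definition toN :: "(nat \<times> nat \<times> nat \<Rightarrow> real) \<Rightarrow> nat \<Rightarrow> nat \<Rightarrow> nat \<Rightarrow> real" where
  "toN x = (\<lambda>l i j. x (l, i, j))"

definition \<sigma> :: "(nat \<Rightarrow> nat \<Rightarrow> bool) \<Rightarrow> 'w \<Rightarrow> (nat \<times> nat \<times> nat \<Rightarrow> real) \<Rightarrow> nat \<times> nat \<times> nat \<Rightarrow> real" where
  "\<sigma> B w x c = (case c of (l, i, j) \<Rightarrow> if i = i0 then \<delta> * gap_H n d f B X w (toN x) l k0 j else 0)"

definition That :: "'w \<Rightarrow> nat \<Rightarrow> (nat \<times> nat \<times> nat \<Rightarrow> real) \<Rightarrow> (nat \<times> nat \<times> nat \<Rightarrow> real)" where
  "That w k x = restrict (\<lambda>c. x c + \<sigma> A w x c) (I k)"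

definition rhat :: "'w \<Rightarrow> nat \<Rightarrow> (nat \<times> nat \<times> nat \<Rightarrow> real) \<Rightarrow> real" where
  "rhat w k x = (\<Prod>c\<in>I k. ratio s (\<sigma> A' w x c) (x c))"

definition G :: "nat \<Rightarrow> (nat \<times> nat \<times> nat \<Rightarrow> real) measure" where
  "G k = PiM (I k) (\<lambda>_. Nrm s)"

lemma finite_I[simp]: "finite (I k)" by (simp add: I_def)
lemma finite_Jl[simp]: "finite (Jl k)" by (simp add: Jl_def)
lemma I_Suc: "I (Suc k) = I k \<union> Jl k" by (auto simp: I_def Jl_def)
lemma I_Jl_disj[simp]: "I k \<inter> Jl k = {}" by (auto simp: I_def Jl_def)

lemma sigma_dep:
  assumes "\<And>c. c \<in> I l \<Longrightarrow> x c = x' c"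
  shows "\<sigma> B w x (l, i, j) = \<sigma> B w x' (l, i, j)"
proof -
  have "gap_H n d f B X w (toN x) l = gap_H n d f B X w (toN x') l"
    by (rule gap_H_dep) (auto simp: toN_def I_def intro!: assms)
  then show ?thesis by (simp add: \<sigma>_def)
qed

lemma comp_meas: "(\<lambda>x. x c) \<in> borel_measurable (PiM K (\<lambda>_. Nrm s))"
proof (cases "c \<in> K")
  case True
  then have "(\<lambda>x. x c) \<in> PiM K (\<lambda>_. Nrm s) \<rightarrow>\<^sub>M Nrm s" by (rule measurable_component_singleton)
  then show ?thesis by (simp add: measurable_cong_sets[OF refl sets_Nrm])
next
  case False
  have "\<And>x. x \<in> space (PiM K (\<lambda>_. Nrm s)) \<Longrightarrow> x c = undefined"
    using False by (auto simp: space_PiM PiE_def extensional_def)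
  then show ?thesis
    by (subst measurable_cong[where g="\<lambda>x. undefined"]) auto
qed

lemma sigma_meas:
  assumes "\<And>c. (\<lambda>\<omega>. F \<omega> c) \<in> borel_measurable M"
    and "\<And>i j. (\<lambda>\<omega>. f (W \<omega>) (X i) j) \<in> borel_measurable M"
  shows "(\<lambda>\<omega>. \<sigma> B (W \<omega>) (F \<omega>) c) \<in> borel_measurable M"
proof -
  obtain l i j where c: "c = (l, i, j)" by (cases c) auto
  have "(\<lambda>\<omega>. gap_H n d f B X (W \<omega>) (toN (F \<omega>)) l k0 j) \<in> borel_measurable M"
    by (rule gap_H_meas) (use assms in \<open>auto simp: toN_def\<close>)
  then show ?thesis by (cases "i = i0") (simp_all add: \<sigma>_def c)
qed

lemma That_meas[measurable]: "That w k \<in> G k \<rightarrow>\<^sub>M G k"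
  unfolding That_def G_def
proof (intro measurable_restrict)
  fix c assume "c \<in> I k"
  have "(\<lambda>x. \<sigma> A w x c) \<in> borel_measurable (PiM (I k) (\<lambda>_. Nrm s))"
    by (rule sigma_meas[where F="\<lambda>x. x" and W="\<lambda>_. w"]) (auto intro: comp_meas)
  then have "(\<lambda>x. x c + \<sigma> A w x c) \<in> borel_measurable (PiM (I k) (\<lambda>_. Nrm s))"
    using comp_meas by (intro borel_measurable_add) auto
  then show "(\<lambda>x. x c + \<sigma> A w x c) \<in> PiM (I k) (\<lambda>_. Nrm s) \<rightarrow>\<^sub>M Nrm s"
    by (simp add: measurable_cong_sets[OF refl sets_Nrm])
qed

lemma rhat_meas[measurable]: "rhat w k \<in> borel_measurable (G k)"
  unfolding rhat_def G_def
proof (intro borel_measurable_prod)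
  fix c assume "c \<in> I k"
  have [measurable]: "(\<lambda>x. \<sigma> A' w x c) \<in> borel_measurable (PiM (I k) (\<lambda>_. Nrm s))"
    by (rule sigma_meas[where F="\<lambda>x. x" and W="\<lambda>_. w"]) (auto intro: comp_meas)
  have [measurable]: "(\<lambda>x. x c) \<in> borel_measurable (PiM (I k) (\<lambda>_. Nrm s))" by (rule comp_meas)
  show "(\<lambda>x. ratio s (\<sigma> A' w x c) (x c)) \<in> borel_measurable (PiM (I k) (\<lambda>_. Nrm s))"
    unfolding ratio_def normal_density_def by measurable
qed


lemma sum_sigma_Jl: "(\<Sum>c\<in>Jl k. (\<sigma> B w x c)\<^sup>2) \<le> 1"
proof -
  define h where "h j = gap_H n d f B X w (toN x) k k0 j" for j
  have "(\<Sum>c\<in>Jl k. (\<sigma> B w x c)\<^sup>2) = (\<Sum>l\<in>{k}. \<Sum>p\<in>{..<n} \<times> {..<d}. (\<sigma> B w x (l, p))\<^sup>2)"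
    unfolding Jl_def by (subst sum.cartesian_product) simp
  also have "\<dots> = (\<Sum>p\<in>{..<n} \<times> {..<d}. (\<sigma> B w x (k, p))\<^sup>2)" by simp
  also have "\<dots> = (\<Sum>i\<in>{..<n}. \<Sum>j\<in>{..<d}. (\<sigma> B w x (k, i, j))\<^sup>2)"
    by (subst sum.cartesian_product) simp
  also have "\<dots> = (\<Sum>i\<in>{..<n}. if i = i0 then (\<Sum>j\<in>{..<d}. (\<delta> * h j)\<^sup>2) else 0)"
    by (intro sum.cong refl) (auto simp: \<sigma>_def h_def)
  also have "\<dots> = (\<Sum>j\<in>{..<d}. (\<delta> * h j)\<^sup>2)" using i0 by (simp add: sum.delta)
  also have "\<dots> = \<delta>\<^sup>2 * (\<Sum>j<d. (h j)\<^sup>2)" by (simp add: power_mult_distrib sum_distrib_left)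
  also have "\<dots> \<le> 1 * 1"
    using \<delta>_sq gap_H_row_norm[OF k0, of d f B X w "toN x" k] unfolding h_def
    by (intro mult_mono) (auto intro: sum_nonneg)
  finally show ?thesis by simp
qed

lemma key_That: "\<sigma> A w x (k, i, j) = \<sigma> A' w (That w k x) (k, i, j)"
proof -
  have "gap_H n d f A' X w (toN (That w k x)) k = gap_H n d f A X w (toN x) k"
  proof (rule key[where K=k])
    fix l i j assume "l < k" "i < n" "j < d"
    then show "toN (That w k x) l i j = toN x l i j + (if i = i0 then \<delta> * gap_H n d f A X w (toN x) l k0 j else 0)"
      by (simp add: toN_def That_def I_def \<sigma>_def)
  qed simp
  then show ?thesis by (simp add: \<sigma>_def)
qed

lemma step_eq:
  assumes x: "x \<in> space (G k)"
  shows "That w (Suc k) (merge (I k) (Jl k) (x, y)) =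
    merge (I k) (Jl k) (That w k x, restrict (\<lambda>c. y c + \<sigma> A' w (That w k x) c) (Jl k))"
proof (rule ext)
  fix c :: "nat \<times> nat \<times> nat"
  obtain l i j where c: "c = (l, i, j)" by (cases c) auto
  have agr: "\<sigma> B w (merge (I k) (Jl k) (x, y)) (l, i, j) = \<sigma> B w x (l, i, j)" if "l \<le> k" for B
    by (rule sigma_dep) (use that in \<open>auto simp: I_def merge_def\<close>)
  consider "c \<in> I k" | "c \<in> Jl k" | "c \<notin> I (Suc k)" using I_Suc by auto
  then show "That w (Suc k) (merge (I k) (Jl k) (x, y)) c =
    merge (I k) (Jl k) (That w k x, restrict (\<lambda>c. y c + \<sigma> A' w (That w k x) c) (Jl k)) c"
  proof cases
    case 1
    then have "l < k" by (simp add: c I_def)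
    then have "\<sigma> A w (merge (I k) (Jl k) (x, y)) (l, i, j) = \<sigma> A w x (l, i, j)" by (intro agr) simp
    then show ?thesis using 1 by (simp add: That_def I_Suc merge_def c)
  next
    case 2
    then have lk: "l = k" and "c \<notin> I k" by (auto simp: c Jl_def I_def)
    moreover have "\<sigma> A w (merge (I k) (Jl k) (x, y)) (l, i, j) = \<sigma> A w x (l, i, j)" using lk by (intro agr) simp
    ultimately show ?thesis using 2 key_That[of w x k i j]
      by (simp add: That_def I_Suc merge_def c)
  next
    case 3
    then show ?thesis using I_Suc by (simp add: That_def merge_def)
  qed
qed

lemma rhat_split:
  shows "rhat w (Suc k) (merge (I k) (Jl k) (x, y)) = rhat w k x * (\<Prod>c\<in>Jl k. ratio s (\<sigma> A' w x c) (y c))"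
proof -
  have agr: "\<sigma> A' w (merge (I k) (Jl k) (x, y)) c = \<sigma> A' w x c" if "c \<in> I (Suc k)" for c
  proof -
    obtain l i j where c: "c = (l, i, j)" by (cases c) auto
    have "l \<le> k" using that by (simp add: c I_def)
    then show ?thesis unfolding c by (intro sigma_dep) (auto simp: I_def merge_def)
  qed
  define m where "m = merge (I k) (Jl k) (x, y)"
  have "rhat w (Suc k) m = (\<Prod>c\<in>I k. ratio s (\<sigma> A' w m c) (m c)) * (\<Prod>c\<in>Jl k. ratio s (\<sigma> A' w m c) (m c))"
    unfolding rhat_def I_Suc by (rule prod.union_disjoint) auto
  also have "(\<Prod>c\<in>I k. ratio s (\<sigma> A' w m c) (m c)) = (\<Prod>c\<in>I k. ratio s (\<sigma> A' w x c) (x c))"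
  proof (intro prod.cong refl)
    fix c assume c: "c \<in> I k"
    then have "m c = x c" by (simp add: m_def merge_def)
    moreover have "\<sigma> A' w m c = \<sigma> A' w x c" using agr[of c] c by (simp add: I_Suc m_def)
    ultimately show "ratio s (\<sigma> A' w m c) (m c) = ratio s (\<sigma> A' w x c) (x c)" by simp
  qed
  also have "(\<Prod>c\<in>Jl k. ratio s (\<sigma> A' w m c) (m c)) = (\<Prod>c\<in>Jl k. ratio s (\<sigma> A' w x c) (y c))"
  proof (intro prod.cong refl)
    fix c assume c: "c \<in> Jl k"
    then have "c \<notin> I k" using I_Jl_disj by blast
    then have "m c = y c" using c by (simp add: m_def merge_def)
    moreover have "\<sigma> A' w m c = \<sigma> A' w x c" using agr[of c] c by (simp add: I_Suc m_def)
    ultimately show "ratio s (\<sigma> A' w m c) (m c) = ratio s (\<sigma> A' w x c) (y c)" by simp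
  qed
  finally have "rhat w (Suc k) m = (\<Prod>c\<in>I k. ratio s (\<sigma> A' w x c) (x c)) * (\<Prod>c\<in>Jl k. ratio s (\<sigma> A' w x c) (y c))" .
  then show ?thesis by (simp add: rhat_def m_def)
qed


lemma prob_G: "prob_space (G k)"
  unfolding G_def by (rule prob_space_PiM) (rule prob_Nrm[OF s])

lemma layer:
  assumes \<alpha>: "\<alpha> > 1"
  shows "distr (G k) (G k) (That w k) = density (G k) (\<lambda>x. ennreal (rhat w k x)) \<and>
         (\<integral>\<^sup>+x. ennreal (rhat w k x powr \<alpha>) \<partial>G k) \<le> ennreal (exp (real k * (\<alpha>*(\<alpha>-1)/(2 * s\<^sup>2))))"
proof (induction k)
  case 0
  have I0: "I 0 = {}" by (simp add: I_def)
  have sp: "space (G 0) = {\<lambda>_. undefined}" by (simp add: G_def I0 space_PiM)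
  have d1: "distr (G 0) (G 0) (That w 0) = G 0"
  proof -
    have "distr (G 0) (G 0) (That w 0) = distr (G 0) (G 0) (\<lambda>x. x)"
      by (rule distr_cong) (auto simp: sp That_def I0)
    then show ?thesis by simp
  qed
  have r1: "rhat w 0 x = 1" for x by (simp add: rhat_def I0)
  have e1: "emeasure (G 0) (space (G 0)) = 1" using prob_space.emeasure_space_1[OF prob_G] .
  show ?case
    using d1 e1 by (simp add: r1 density_1)
next
  case (Suc k)
  define C where "C = \<alpha>*(\<alpha>-1)/(2 * s\<^sup>2)"
  have C0: "C \<ge> 0" using \<alpha> by (simp add: C_def)
  define \<Lambda> where "\<Lambda> = PiM (Jl k) (\<lambda>_::nat\<times>nat\<times>nat. Nrm s)"
  define mg :: "(nat \<times> nat \<times> nat \<Rightarrow> real) \<times> (nat \<times> nat \<times> nat \<Rightarrow> real) \<Rightarrow> nat \<times> nat \<times> nat \<Rightarrow> real" where "mg = merge (I k) (Jl k)"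
  define G' where "G' = G k"
  have IH1: "distr G' G' (That w k) = density G' (\<lambda>x. ennreal (rhat w k x))"
    and IH2: "(\<integral>\<^sup>+x. ennreal (rhat w k x powr \<alpha>) \<partial>G') \<le> ennreal (exp (real k * C))"
    using Suc.IH by (simp_all add: G'_def C_def)
  interpret P: product_prob_space "\<lambda>_::nat\<times>nat\<times>nat. Nrm s" by (rule product_prob_spaceI) (rule prob_Nrm[OF s])
  have p\<Lambda>: "prob_space \<Lambda>" unfolding \<Lambda>_def by (rule prob_space_PiM) (rule prob_Nrm[OF s])
  interpret G': prob_space G' unfolding G'_def by (rule prob_G)
  interpret L: prob_space \<Lambda> by fact
  have GS: "G (Suc k) = distr (G' \<Otimes>\<^sub>M \<Lambda>) (G (Suc k)) mg"
    unfolding G'_def G_def \<Lambda>_def mg_def I_Suc by (rule P.distr_merge[symmetric]) auto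
  have mg_meas[measurable]: "mg \<in> G' \<Otimes>\<^sub>M \<Lambda> \<rightarrow>\<^sub>M G (Suc k)"
    unfolding mg_def G'_def G_def \<Lambda>_def I_Suc by (rule measurable_merge)
  have That_meas'[measurable]: "That w k \<in> G' \<rightarrow>\<^sub>M G'" unfolding G'_def by (rule That_meas)
  have fst_comp[measurable]: "(\<lambda>z. fst z c) \<in> borel_measurable (G' \<Otimes>\<^sub>M \<Lambda>)" for c
    using measurable_compose[OF measurable_fst comp_meas] unfolding G'_def G_def .
  have snd_comp[measurable]: "(\<lambda>z. snd z c) \<in> borel_measurable (G' \<Otimes>\<^sub>M \<Lambda>)" for c
    using measurable_compose[OF measurable_snd comp_meas] unfolding \<Lambda>_def .
  have sig_comp[measurable]: "(\<lambda>z. \<sigma> A' w (fst z) c) \<in> borel_measurable (G' \<Otimes>\<^sub>M \<Lambda>)" for c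
    by (rule sigma_meas[where W="\<lambda>_. w"]) auto
  define T' where "T' x y = restrict (\<lambda>c. y c + \<sigma> A' w x c) (Jl k)" for x y
  define Q' where "Q' x y = ennreal (\<Prod>c\<in>Jl k. ratio s (\<sigma> A' w x c) (y c))" for x y
  have T'_eq: "(\<lambda>(x,y). T' x y) = (\<lambda>z. restrict (\<lambda>c. snd z c + \<sigma> A' w (fst z) c) (Jl k))"
    by (auto simp: T'_def split_beta)
  have T'_meas: "(\<lambda>(x,y). T' x y) \<in> G' \<Otimes>\<^sub>M \<Lambda> \<rightarrow>\<^sub>M \<Lambda>"
  proof -
    have "(\<lambda>z. restrict (\<lambda>c. snd z c + \<sigma> A' w (fst z) c) (Jl k)) \<in> G' \<Otimes>\<^sub>M \<Lambda> \<rightarrow>\<^sub>M PiM (Jl k) (\<lambda>_. Nrm s)"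
    proof (rule measurable_restrict)
      fix c assume "c \<in> Jl k"
      have "(\<lambda>z. snd z c + \<sigma> A' w (fst z) c) \<in> borel_measurable (G' \<Otimes>\<^sub>M \<Lambda>)" by measurable
      then show "(\<lambda>z. snd z c + \<sigma> A' w (fst z) c) \<in> G' \<Otimes>\<^sub>M \<Lambda> \<rightarrow>\<^sub>M Nrm s"
        by (simp only: measurable_cong_sets[OF refl sets_Nrm])
    qed
    from this[unfolded \<Lambda>_def[symmetric]] show ?thesis unfolding T'_eq .
  qed
  have Q'_eq: "(\<lambda>(x,y). Q' x y) = (\<lambda>z. ennreal (\<Prod>c\<in>Jl k. ratio s (\<sigma> A' w (fst z) c) (snd z c)))"
    by (auto simp: Q'_def split_beta)
  have Q'_meas: "(\<lambda>(x,y). Q' x y) \<in> borel_measurable (G' \<Otimes>\<^sub>M \<Lambda>)"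
    unfolding Q'_eq ratio_def normal_density_def by measurable
  define \<mu> where "\<mu> = density G' (\<lambda>x. ennreal (rhat w k x))"
  have s\<mu>\<Lambda>: "sets (\<mu> \<Otimes>\<^sub>M \<Lambda>) = sets (G' \<Otimes>\<^sub>M \<Lambda>)"
    by (rule sets_pair_measure_cong) (simp_all add: \<mu>_def)
  have shear_eq: "distr (\<mu> \<Otimes>\<^sub>M \<Lambda>) (\<mu> \<Otimes>\<^sub>M \<Lambda>) (\<lambda>(x,y). (x, T' x y)) = density (\<mu> \<Otimes>\<^sub>M \<Lambda>) (\<lambda>(x,y). Q' x y)"
  proof (rule shear)
    show "sigma_finite_measure \<Lambda>" by (rule L.sigma_finite_measure_axioms)
    show "(\<lambda>(x,y). T' x y) \<in> \<mu> \<Otimes>\<^sub>M \<Lambda> \<rightarrow>\<^sub>M \<Lambda>"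
      using T'_meas by (simp only: measurable_cong_sets[OF s\<mu>\<Lambda> refl])
    show "(\<lambda>(x,y). Q' x y) \<in> borel_measurable (\<mu> \<Otimes>\<^sub>M \<Lambda>)"
      using Q'_meas by (simp only: measurable_cong_sets[OF s\<mu>\<Lambda> refl])
    fix x
    show "distr \<Lambda> \<Lambda> (T' x) = density \<Lambda> (Q' x)"
      unfolding T'_def[abs_def] Q'_def[abs_def] \<Lambda>_def by (rule gauss_shift[OF finite_Jl s])
  qed
  have pd: "distr (G' \<Otimes>\<^sub>M \<Lambda>) (G' \<Otimes>\<^sub>M \<Lambda>) (\<lambda>(x,y). (That w k x, y)) = \<mu> \<Otimes>\<^sub>M \<Lambda>"
  proof -
    have "distr G' G' (That w k) \<Otimes>\<^sub>M distr \<Lambda> \<Lambda> (\<lambda>y. y) = distr (G' \<Otimes>\<^sub>M \<Lambda>) (G' \<Otimes>\<^sub>M \<Lambda>) (\<lambda>(x, y). (That w k x, y))"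
      by (rule pair_measure_distr) (auto simp: L.sigma_finite_measure_axioms)
    then show ?thesis by (simp add: IH1 \<mu>_def)
  qed
  have \<mu>\<Lambda>: "\<mu> \<Otimes>\<^sub>M \<Lambda> = density (G' \<Otimes>\<^sub>M \<Lambda>) (\<lambda>(x,y). ennreal (rhat w k x) * 1)"
  proof -
    have "density G' (\<lambda>x. ennreal (rhat w k x)) \<Otimes>\<^sub>M density \<Lambda> (\<lambda>_. 1) = density (G' \<Otimes>\<^sub>M \<Lambda>) (\<lambda>(x,y). ennreal (rhat w k x) * 1)"
      by (rule pair_measure_density) (auto simp: L.sigma_finite_measure_axioms density_1 G'_def)
    then show ?thesis by (simp add: \<mu>_def density_1)
  qed
  define \<rho>2 where "\<rho>2 z = ennreal (rhat w k (fst z)) * Q' (fst z) (snd z)" for z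
  define \<Phi> where "\<Phi> z = (That w k (fst z), T' (That w k (fst z)) (snd z))" for z
  have \<Phi>_meas[measurable]: "\<Phi> \<in> G' \<Otimes>\<^sub>M \<Lambda> \<rightarrow>\<^sub>M G' \<Otimes>\<^sub>M \<Lambda>"
  proof -
    have a: "(\<lambda>z. (That w k (fst z), snd z)) \<in> G' \<Otimes>\<^sub>M \<Lambda> \<rightarrow>\<^sub>M G' \<Otimes>\<^sub>M \<Lambda>" by measurable
    have "(\<lambda>z. (case (That w k (fst z), snd z) of (x, y) \<Rightarrow> T' x y)) \<in> G' \<Otimes>\<^sub>M \<Lambda> \<rightarrow>\<^sub>M \<Lambda>"
      by (rule measurable_compose[OF a T'_meas])
    then have b: "(\<lambda>z. T' (That w k (fst z)) (snd z)) \<in> G' \<Otimes>\<^sub>M \<Lambda> \<rightarrow>\<^sub>M \<Lambda>" by (simp only: prod.case)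
    show ?thesis unfolding \<Phi>_def using b by measurable
  qed
  have \<Phi>_eq: "distr (G' \<Otimes>\<^sub>M \<Lambda>) (G' \<Otimes>\<^sub>M \<Lambda>) \<Phi> = density (G' \<Otimes>\<^sub>M \<Lambda>) \<rho>2"
  proof -
    have S_meas: "(\<lambda>(x,y). (x, T' x y)) \<in> G' \<Otimes>\<^sub>M \<Lambda> \<rightarrow>\<^sub>M G' \<Otimes>\<^sub>M \<Lambda>"
    proof -
      have "(\<lambda>z. (fst z, case z of (x,y) \<Rightarrow> T' x y)) \<in> G' \<Otimes>\<^sub>M \<Lambda> \<rightarrow>\<^sub>M G' \<Otimes>\<^sub>M \<Lambda>"
        using T'_meas by measurable
      moreover have "(\<lambda>z. (fst z, case z of (x,y) \<Rightarrow> T' x y)) = (\<lambda>(x,y). (x, T' x y))"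
        by (auto simp: split_beta)
      ultimately show ?thesis by simp
    qed
    have U_meas: "(\<lambda>(x,y). (That w k x, y)) \<in> G' \<Otimes>\<^sub>M \<Lambda> \<rightarrow>\<^sub>M G' \<Otimes>\<^sub>M \<Lambda>"
    proof -
      have "(\<lambda>z. (That w k (fst z), snd z)) \<in> G' \<Otimes>\<^sub>M \<Lambda> \<rightarrow>\<^sub>M G' \<Otimes>\<^sub>M \<Lambda>" by measurable
      moreover have "(\<lambda>z. (That w k (fst z), snd z)) = (\<lambda>(x,y). (That w k x, y))"
        by (auto simp: split_beta)
      ultimately show ?thesis by simp
    qed
    have comp: "(\<lambda>(x,y). (x, T' x y)) \<circ> (\<lambda>(x,y). (That w k x, y)) = \<Phi>"
      by (auto simp: \<Phi>_def split_beta)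
    have "distr (G' \<Otimes>\<^sub>M \<Lambda>) (G' \<Otimes>\<^sub>M \<Lambda>) \<Phi>
        = distr (distr (G' \<Otimes>\<^sub>M \<Lambda>) (G' \<Otimes>\<^sub>M \<Lambda>) (\<lambda>(x,y). (That w k x, y))) (G' \<Otimes>\<^sub>M \<Lambda>) (\<lambda>(x,y). (x, T' x y))"
      by (simp only: distr_distr[OF S_meas U_meas] comp)
    also have "\<dots> = distr (\<mu> \<Otimes>\<^sub>M \<Lambda>) (G' \<Otimes>\<^sub>M \<Lambda>) (\<lambda>(x,y). (x, T' x y))"
      by (simp only: pd)
    also have "\<dots> = distr (\<mu> \<Otimes>\<^sub>M \<Lambda>) (\<mu> \<Otimes>\<^sub>M \<Lambda>) (\<lambda>(x,y). (x, T' x y))"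
      by (rule distr_cong) (simp_all only: s\<mu>\<Lambda> refl)
    also have "\<dots> = density (\<mu> \<Otimes>\<^sub>M \<Lambda>) (\<lambda>(x,y). Q' x y)" by (rule shear_eq)
    also have "\<dots> = density (density (G' \<Otimes>\<^sub>M \<Lambda>) (\<lambda>(x,y). ennreal (rhat w k x) * 1)) (\<lambda>(x,y). Q' x y)"
      by (simp only: \<mu>\<Lambda>)
    also have "\<dots> = density (G' \<Otimes>\<^sub>M \<Lambda>) (\<lambda>z. (case z of (x,y) \<Rightarrow> ennreal (rhat w k x) * 1) * (case z of (x,y) \<Rightarrow> Q' x y))"
    proof (rule density_density_eq)
      have "(\<lambda>z. ennreal (rhat w k (fst z))) \<in> borel_measurable (G' \<Otimes>\<^sub>M \<Lambda>)"
        using rhat_meas[of w k] unfolding G'_def by measurable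
      moreover have "(\<lambda>z. ennreal (rhat w k (fst z))) = (\<lambda>z. case z of (x,y) \<Rightarrow> ennreal (rhat w k x) * 1)"
        by (auto simp: split_beta)
      ultimately show "(\<lambda>z. case z of (x,y) \<Rightarrow> ennreal (rhat w k x) * 1) \<in> borel_measurable (G' \<Otimes>\<^sub>M \<Lambda>)" by simp
      show "(\<lambda>(x,y). Q' x y) \<in> borel_measurable (G' \<Otimes>\<^sub>M \<Lambda>)" by (rule Q'_meas)
    qed
    also have "(\<lambda>z. (case z of (x,y) \<Rightarrow> ennreal (rhat w k x) * 1) * (case z of (x,y) \<Rightarrow> Q' x y)) = \<rho>2"
      by (auto simp: \<rho>2_def split_beta)
    finally show ?thesis .
  qed
  have That_S[measurable]: "That w (Suc k) \<in> G (Suc k) \<rightarrow>\<^sub>M G (Suc k)" by (rule That_meas)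
  have part1: "distr (G (Suc k)) (G (Suc k)) (That w (Suc k)) = density (G (Suc k)) (\<lambda>x. ennreal (rhat w (Suc k) x))"
  proof -
    have "distr (G (Suc k)) (G (Suc k)) (That w (Suc k)) = distr (distr (G' \<Otimes>\<^sub>M \<Lambda>) (G (Suc k)) mg) (G (Suc k)) (That w (Suc k))"
      by (simp only: GS[symmetric])
    also have "\<dots> = distr (G' \<Otimes>\<^sub>M \<Lambda>) (G (Suc k)) (That w (Suc k) \<circ> mg)"
      by (rule distr_distr[OF That_S mg_meas])
    also have "\<dots> = distr (G' \<Otimes>\<^sub>M \<Lambda>) (G (Suc k)) (mg \<circ> \<Phi>)"
    proof (rule distr_cong)
      fix z assume z: "z \<in> space (G' \<Otimes>\<^sub>M \<Lambda>)"
      then obtain x y where zxy: "z = (x, y)" and x: "x \<in> space (G k)"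
        by (auto simp: space_pair_measure G'_def)
      show "(That w (Suc k) \<circ> mg) z = (mg \<circ> \<Phi>) z"
        unfolding zxy using step_eq[OF x, of w y] by (simp add: mg_def \<Phi>_def T'_def)
    qed simp_all
    also have "\<dots> = distr (distr (G' \<Otimes>\<^sub>M \<Lambda>) (G' \<Otimes>\<^sub>M \<Lambda>) \<Phi>) (G (Suc k)) mg"
      by (rule distr_distr[OF mg_meas \<Phi>_meas, symmetric])
    also have "\<dots> = distr (density (G' \<Otimes>\<^sub>M \<Lambda>) \<rho>2) (G (Suc k)) mg"
      by (simp only: \<Phi>_eq)
    also have "\<dots> = distr (density (G' \<Otimes>\<^sub>M \<Lambda>) (\<lambda>z. ennreal (rhat w (Suc k) (mg z)))) (G (Suc k)) mg"
    proof -
      have "density (G' \<Otimes>\<^sub>M \<Lambda>) \<rho>2 = density (G' \<Otimes>\<^sub>M \<Lambda>) (\<lambda>z. ennreal (rhat w (Suc k) (mg z)))"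
      proof (rule density_cong)
        show "\<rho>2 \<in> borel_measurable (G' \<Otimes>\<^sub>M \<Lambda>)"
        proof -
          have "(\<lambda>z. ennreal (rhat w k (fst z)) * (case z of (x,y) \<Rightarrow> Q' x y)) \<in> borel_measurable (G' \<Otimes>\<^sub>M \<Lambda>)"
            using rhat_meas[of w k] Q'_meas unfolding G'_def by measurable
          moreover have "(\<lambda>z. ennreal (rhat w k (fst z)) * (case z of (x,y) \<Rightarrow> Q' x y)) = \<rho>2"
            by (auto simp: \<rho>2_def split_beta)
          ultimately show ?thesis by simp
        qed
        show "(\<lambda>z. ennreal (rhat w (Suc k) (mg z))) \<in> borel_measurable (G' \<Otimes>\<^sub>M \<Lambda>)"
          using rhat_meas[of w "Suc k"] by measurable
        show "AE z in G' \<Otimes>\<^sub>M \<Lambda>. \<rho>2 z = ennreal (rhat w (Suc k) (mg z))"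
        proof (rule AE_I2)
          fix z :: "(nat \<times> nat \<times> nat \<Rightarrow> real) \<times> (nat \<times> nat \<times> nat \<Rightarrow> real)"
          obtain x y where zxy: "z = (x, y)" by (cases z)
          have "rhat w k x \<ge> 0" unfolding rhat_def using ratio_pos[OF s] by (intro prod_nonneg) (auto intro: less_imp_le)
          moreover have "(\<Prod>c\<in>Jl k. ratio s (\<sigma> A' w x c) (y c)) \<ge> 0" using ratio_pos[OF s] by (intro prod_nonneg) (auto intro: less_imp_le)
          ultimately show "\<rho>2 z = ennreal (rhat w (Suc k) (mg z))"
            unfolding zxy \<rho>2_def Q'_def mg_def rhat_split by (simp add: ennreal_mult)
        qed
      qed
      then show ?thesis by simp
    qed
    also have "\<dots> = density (distr (G' \<Otimes>\<^sub>M \<Lambda>) (G (Suc k)) mg) (\<lambda>x. ennreal (rhat w (Suc k) x))"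
      by (rule density_distr[symmetric]) (use rhat_meas[of w "Suc k"] in measurable)
    also have "\<dots> = density (G (Suc k)) (\<lambda>x. ennreal (rhat w (Suc k) x))"
      by (simp only: GS[symmetric])
    finally show ?thesis .
  qed
  have rk_nn: "rhat w k x \<ge> 0" for x
    unfolding rhat_def using ratio_pos[OF s] by (intro prod_nonneg) (auto intro: less_imp_le)
  have q_nn: "(\<Prod>c\<in>Jl k. ratio s (\<sigma> A' w x c) (y c)) \<ge> 0" for x y
    using ratio_pos[OF s] by (intro prod_nonneg) (auto intro: less_imp_le)
  have part2: "(\<integral>\<^sup>+x. ennreal (rhat w (Suc k) x powr \<alpha>) \<partial>G (Suc k)) \<le> ennreal (exp (real (Suc k) * C))"
  proof -
    have rS[measurable]: "rhat w (Suc k) \<in> borel_measurable (G (Suc k))" by (rule rhat_meas)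
    have "(\<integral>\<^sup>+x. ennreal (rhat w (Suc k) x powr \<alpha>) \<partial>G (Suc k))
        = (\<integral>\<^sup>+x. ennreal (rhat w (Suc k) x powr \<alpha>) \<partial>distr (G' \<Otimes>\<^sub>M \<Lambda>) (G (Suc k)) mg)"
      by (simp only: GS[symmetric])
    also have "\<dots> = (\<integral>\<^sup>+z. ennreal (rhat w (Suc k) (mg z) powr \<alpha>) \<partial>(G' \<Otimes>\<^sub>M \<Lambda>))"
      by (rule nn_integral_distr[OF mg_meas]) measurable
    also have "\<dots> = (\<integral>\<^sup>+x. \<integral>\<^sup>+y. ennreal (rhat w (Suc k) (mg (x, y)) powr \<alpha>) \<partial>\<Lambda> \<partial>G')"
    proof -
      have m: "(\<lambda>z. ennreal (rhat w (Suc k) (mg z) powr \<alpha>)) \<in> borel_measurable (G' \<Otimes>\<^sub>M \<Lambda>)" by measurable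
      show ?thesis using L.nn_integral_fst[OF m] by simp
    qed
    also have "\<dots> = (\<integral>\<^sup>+x. ennreal (rhat w k x powr \<alpha>) * (\<integral>\<^sup>+y. ennreal ((\<Prod>c\<in>Jl k. ratio s (\<sigma> A' w x c) (y c)) powr \<alpha>) \<partial>\<Lambda>) \<partial>G')"
    proof (intro nn_integral_cong)
      fix x assume x: "x \<in> space G'"
      have "(\<integral>\<^sup>+y. ennreal (rhat w (Suc k) (mg (x, y)) powr \<alpha>) \<partial>\<Lambda>)
          = (\<integral>\<^sup>+y. ennreal (rhat w k x powr \<alpha>) * ennreal ((\<Prod>c\<in>Jl k. ratio s (\<sigma> A' w x c) (y c)) powr \<alpha>) \<partial>\<Lambda>)"
        by (intro nn_integral_cong) (simp add: mg_def rhat_split powr_mult rk_nn q_nn ennreal_mult)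
      also have "\<dots> = ennreal (rhat w k x powr \<alpha>) * (\<integral>\<^sup>+y. ennreal ((\<Prod>c\<in>Jl k. ratio s (\<sigma> A' w x c) (y c)) powr \<alpha>) \<partial>\<Lambda>)"
      proof (rule nn_integral_cmult)
        have [measurable]: "(\<lambda>y. y c) \<in> borel_measurable \<Lambda>" for c unfolding \<Lambda>_def by (rule comp_meas)
        show "(\<lambda>y. ennreal ((\<Prod>c\<in>Jl k. ratio s (\<sigma> A' w x c) (y c)) powr \<alpha>)) \<in> borel_measurable \<Lambda>"
          unfolding ratio_def normal_density_def by measurable
      qed
      finally show "(\<integral>\<^sup>+y. ennreal (rhat w (Suc k) (mg (x, y)) powr \<alpha>) \<partial>\<Lambda>)
          = ennreal (rhat w k x powr \<alpha>) * (\<integral>\<^sup>+y. ennreal ((\<Prod>c\<in>Jl k. ratio s (\<sigma> A' w x c) (y c)) powr \<alpha>) \<partial>\<Lambda>)" .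
    qed
    also have "\<dots> = (\<integral>\<^sup>+x. ennreal (rhat w k x powr \<alpha>) * ennreal (exp (\<alpha>*(\<alpha>-1)*(\<Sum>c\<in>Jl k. (\<sigma> A' w x c)\<^sup>2) / (2 * s\<^sup>2))) \<partial>G')"
      unfolding \<Lambda>_def by (simp only: gauss_renyi[OF finite_Jl s])
    also have "\<dots> \<le> (\<integral>\<^sup>+x. ennreal (rhat w k x powr \<alpha>) * ennreal (exp C) \<partial>G')"
    proof (intro nn_integral_mono mult_left_mono ennreal_leI)
      fix x
      have "\<alpha>*(\<alpha>-1)*(\<Sum>c\<in>Jl k. (\<sigma> A' w x c)\<^sup>2) \<le> \<alpha>*(\<alpha>-1)*1"
        using \<alpha> sum_sigma_Jl[of A' w x k] by (intro mult_left_mono) auto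
      then have "\<alpha>*(\<alpha>-1)*(\<Sum>c\<in>Jl k. (\<sigma> A' w x c)\<^sup>2) / (2 * s\<^sup>2) \<le> C"
        unfolding C_def using s by (intro divide_right_mono) auto
      then show "exp (\<alpha>*(\<alpha>-1)*(\<Sum>c\<in>Jl k. (\<sigma> A' w x c)\<^sup>2) / (2 * s\<^sup>2)) \<le> exp C" by simp
    qed auto
    also have "\<dots> = (\<integral>\<^sup>+x. ennreal (rhat w k x powr \<alpha>) \<partial>G') * ennreal (exp C)"
      by (rule nn_integral_multc) (use rhat_meas[of w k] in \<open>unfold G'_def, measurable\<close>)
    also have "\<dots> \<le> ennreal (exp (real k * C)) * ennreal (exp C)"
      by (intro mult_right_mono IH2) auto
    also have "\<dots> = ennreal (exp (real (Suc k) * C))"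
      by (simp add: ennreal_mult[symmetric] exp_add[symmetric] algebra_simps)
    finally show ?thesis .
  qed
  show ?case using part1 part2 by (simp add: C_def)
qed

end

lemma measurable_PiM_UNIV:
  assumes "\<And>i. (\<lambda>x. F x i) \<in> M \<rightarrow>\<^sub>M N i"
  shows "F \<in> M \<rightarrow>\<^sub>M PiM UNIV N"
  using measurable_restrict[of UNIV "\<lambda>i x. F x i" M N] assms by (simp add: restrict_UNIV)

lemma to_row_meas: "(\<And>j. (\<lambda>x. F x j) \<in> borel_measurable M) \<Longrightarrow> F \<in> M \<rightarrow>\<^sub>M RowS"
  unfolding RowS_def by (rule measurable_PiM_UNIV)

lemma to_mat_meas: "(\<And>i j. (\<lambda>x. F x i j) \<in> borel_measurable M) \<Longrightarrow> F \<in> M \<rightarrow>\<^sub>M MatS"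
  unfolding MatS_def by (intro measurable_PiM_UNIV to_row_meas)

lemma to_noise_meas: "(\<And>l i j. (\<lambda>x. F x l i j) \<in> borel_measurable M) \<Longrightarrow> F \<in> M \<rightarrow>\<^sub>M NoiseS"
  unfolding NoiseS_def by (intro measurable_PiM_UNIV to_mat_meas)

lemma row_comp: "(\<lambda>x. x j) \<in> borel_measurable RowS"
  unfolding RowS_def by (rule measurable_component_singleton) simp

lemma mat_comp: "(\<lambda>x. x i j) \<in> borel_measurable MatS"
proof -
  have "(\<lambda>x. x i) \<in> MatS \<rightarrow>\<^sub>M RowS" unfolding MatS_def by (rule measurable_component_singleton) simp
  then show ?thesis using measurable_compose[OF _ row_comp] by blast
qed

lemma noise_comp: "(\<lambda>x. x l i j) \<in> borel_measurable NoiseS"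
proof -
  have "(\<lambda>x. x l) \<in> NoiseS \<rightarrow>\<^sub>M MatS" unfolding NoiseS_def by (rule measurable_component_singleton) simp
  then show ?thesis using measurable_compose[OF _ mat_comp] by blast
qed

context gap_pair
begin

definition Tn :: "nat \<Rightarrow> 'w \<Rightarrow> (nat \<Rightarrow> nat \<Rightarrow> nat \<Rightarrow> real) \<Rightarrow> nat \<Rightarrow> nat \<Rightarrow> nat \<Rightarrow> real" where
  "Tn L w N = (\<lambda>l i j. N l i j + (if l < L \<and> i = i0 \<and> j < d then \<delta> * gap_H n d f A X w N l k0 j else 0))"

definition rn :: "nat \<Rightarrow> 'w \<Rightarrow> (nat \<Rightarrow> nat \<Rightarrow> nat \<Rightarrow> real) \<Rightarrow> real" where
  "rn L w N = rhat w L (\<lambda>(l, i, j). N l i j)"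

definition emb :: "nat \<Rightarrow> (nat \<times> nat \<times> nat \<Rightarrow> real) \<Rightarrow> nat \<Rightarrow> nat \<Rightarrow> nat \<Rightarrow> real" where
  "emb L y = (\<lambda>l i j. if l < L \<and> i < n \<and> j < d then y (l, i, j) else 0)"

lemma gauss_noise_eq: "gauss_noise L n d s = distr (G L) NoiseS (emb L)"
  unfolding gauss_noise_def G_def I_def Nrm_def emb_def ..

lemma Z_Tn: "gap_Z L n d f A' X w (Tn L w N) = gap_Z L n d f A X w N"
proof -
  have H: "gap_H n d f A' X w (Tn L w N) l = gap_H n d f A X w N l" if "l \<le> L" for l
    by (rule key[where K=L]) (use that in \<open>auto simp: Tn_def\<close>)
  show ?thesis
  proof (intro ext)
    fix i c
    show "gap_Z L n d f A' X w (Tn L w N) i c = gap_Z L n d f A X w N i c"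
    proof (cases "i < n \<and> c < (L + 1) * d")
      case True
      then have "c div d < L + 1" by (intro less_mult_imp_div_less) simp
      then show ?thesis using True H[of "c div d"] by (simp add: gap_Z_def)
    next
      case False
      then show ?thesis unfolding gap_Z_def by auto
    qed
  qed
qed

lemma rhat_agree:
  assumes "\<And>c. c \<in> I k \<Longrightarrow> x c = x' c"
  shows "rhat w k x = rhat w k x'"
  unfolding rhat_def
proof (intro prod.cong refl)
  fix c assume c: "c \<in> I k"
  obtain l i j where cc: "c = (l, i, j)" by (cases c) auto
  have "\<sigma> A' w x (l, i, j) = \<sigma> A' w x' (l, i, j)"
    by (rule sigma_dep) (use c cc assms in \<open>auto simp: I_def\<close>)
  then show "ratio s (\<sigma> A' w x c) (x c) = ratio s (\<sigma> A' w x' c) (x' c)"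
    using assms[OF c] cc by simp
qed


lemma Tn_meas_gen:
  assumes fW: "\<And>i j. (\<lambda>\<omega>. f (W \<omega>) (X i) j) \<in> borel_measurable M"
    and FN: "\<And>l i j. (\<lambda>\<omega>. F \<omega> l i j) \<in> borel_measurable M"
  shows "(\<lambda>\<omega>. Tn L (W \<omega>) (F \<omega>)) \<in> M \<rightarrow>\<^sub>M NoiseS"
proof (rule to_noise_meas)
  fix l i j
  have [measurable]: "(\<lambda>\<omega>. gap_H n d f A X (W \<omega>) (F \<omega>) l k0 j) \<in> borel_measurable M"
    by (rule gap_H_meas[where f=f and X=X and W=W and F=F]) (rule fW, rule FN)
  note FN[measurable]
  show "(\<lambda>\<omega>. Tn L (W \<omega>) (F \<omega>) l i j) \<in> borel_measurable M"
    unfolding Tn_def by measurable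
qed

lemma rn_meas_gen:
  assumes fW: "\<And>i j. (\<lambda>\<omega>. f (W \<omega>) (X i) j) \<in> borel_measurable M"
    and FN: "\<And>l i j. (\<lambda>\<omega>. F \<omega> l i j) \<in> borel_measurable M"
  shows "(\<lambda>\<omega>. rn L (W \<omega>) (F \<omega>)) \<in> borel_measurable M"
proof -
  have comp: "(\<lambda>\<omega>. (case c of (l, i, j) \<Rightarrow> F \<omega> l i j)) \<in> borel_measurable M" for c
    by (cases c) (simp add: FN)
  have sig[measurable]: "(\<lambda>\<omega>. \<sigma> A' (W \<omega>) (\<lambda>(l, i, j). F \<omega> l i j) c) \<in> borel_measurable M" for c
    by (rule sigma_meas[OF _ fW]) (rule comp)
  have comp'[measurable]: "(\<lambda>\<omega>. (\<lambda>(l, i, j). F \<omega> l i j) c) \<in> borel_measurable M" for c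
    by (rule comp)
  show ?thesis
    unfolding rn_def rhat_def ratio_def normal_density_def by measurable
qed

lemma emb_meas[measurable]: "emb L \<in> G L \<rightarrow>\<^sub>M NoiseS"
proof (rule to_noise_meas)
  fix l i j
  have [measurable]: "(\<lambda>x. x (l, i, j)) \<in> borel_measurable (G L)" unfolding G_def by (rule comp_meas)
  show "(\<lambda>x. emb L x l i j) \<in> borel_measurable (G L)"
    unfolding emb_def by measurable
qed

lemma Tn_meas[measurable]: "Tn L w \<in> NoiseS \<rightarrow>\<^sub>M NoiseS"
  by (rule Tn_meas_gen[where W="\<lambda>_. w" and F="\<lambda>N. N"]) (auto intro: noise_comp)

lemma rn_meas[measurable]: "rn L w \<in> borel_measurable NoiseS"
  by (rule rn_meas_gen[where W="\<lambda>_. w" and F="\<lambda>N. N"]) (auto intro: noise_comp)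

lemma Tn_emb:
  assumes y: "y \<in> space (G L)"
  shows "Tn L w (emb L y) = emb L (That w L y)"
proof (intro ext)
  fix l i j
  have H: "gap_H n d f A X w (emb L y) l = gap_H n d f A X w (toN y) l" if "l < L"
    by (rule gap_H_dep) (use that in \<open>auto simp: emb_def toN_def\<close>)
  show "Tn L w (emb L y) l i j = emb L (That w L y) l i j"
  proof (cases "l < L \<and> i < n \<and> j < d")
    case True
    then have "(l, i, j) \<in> I L" by (simp add: I_def)
    then show ?thesis using True H by (simp add: Tn_def emb_def That_def \<sigma>_def)
  next
    case False
    then have c: "\<not> (l < L \<and> i = i0 \<and> j < d)" using i0 by auto
    have e1: "emb L y l i j = 0" using False by (auto simp: emb_def)
    have e2: "emb L (That w L y) l i j = 0" using False by (auto simp: emb_def)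
    show ?thesis using e1 e2 c by (auto simp: Tn_def)
  qed
qed

lemma rn_emb:
  assumes y: "y \<in> space (G L)"
  shows "rn L w (emb L y) = rhat w L y"
  unfolding rn_def by (rule rhat_agree) (auto simp: emb_def I_def)

lemma noise_step:
  assumes \<alpha>: "\<alpha> > 1"
  shows "distr (gauss_noise L n d s) NoiseS (Tn L w) = density (gauss_noise L n d s) (\<lambda>N. ennreal (rn L w N)) \<and>
    (\<integral>\<^sup>+N. ennreal (rn L w N powr \<alpha>) \<partial>gauss_noise L n d s) \<le> ennreal (exp (real L * (\<alpha>*(\<alpha>-1)/(2 * s\<^sup>2))))"
proof
  note LY = layer[OF \<alpha>, of L w]
  have "distr (gauss_noise L n d s) NoiseS (Tn L w) = distr (distr (G L) NoiseS (emb L)) NoiseS (Tn L w)"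
    by (simp only: gauss_noise_eq)
  also have "\<dots> = distr (G L) NoiseS (Tn L w \<circ> emb L)"
    by (rule distr_distr) measurable
  also have "\<dots> = distr (G L) NoiseS (emb L \<circ> That w L)"
    by (rule distr_cong) (simp_all add: Tn_emb)
  also have "\<dots> = distr (distr (G L) (G L) (That w L)) NoiseS (emb L)"
    by (rule distr_distr[symmetric]) measurable
  also have "\<dots> = distr (density (G L) (\<lambda>x. ennreal (rhat w L x))) NoiseS (emb L)"
    using LY by simp
  also have "\<dots> = distr (density (G L) (\<lambda>y. ennreal (rn L w (emb L y)))) NoiseS (emb L)"
  proof -
    have "density (G L) (\<lambda>x. ennreal (rhat w L x)) = density (G L) (\<lambda>y. ennreal (rn L w (emb L y)))"
      by (rule density_cong) (auto simp: rn_emb)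
    then show ?thesis by simp
  qed
  also have "\<dots> = density (distr (G L) NoiseS (emb L)) (\<lambda>N. ennreal (rn L w N))"
    by (rule density_distr[symmetric]) measurable
  also have "\<dots> = density (gauss_noise L n d s) (\<lambda>N. ennreal (rn L w N))"
    by (simp only: gauss_noise_eq)
  finally show "distr (gauss_noise L n d s) NoiseS (Tn L w) = density (gauss_noise L n d s) (\<lambda>N. ennreal (rn L w N))" .
next
  note LY = layer[OF \<alpha>, of L w]
  have "(\<integral>\<^sup>+N. ennreal (rn L w N powr \<alpha>) \<partial>gauss_noise L n d s) = (\<integral>\<^sup>+N. ennreal (rn L w N powr \<alpha>) \<partial>distr (G L) NoiseS (emb L))"
    by (simp only: gauss_noise_eq)
  also have "\<dots> = (\<integral>\<^sup>+y. ennreal (rn L w (emb L y) powr \<alpha>) \<partial>G L)"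
    by (rule nn_integral_distr) measurable
  also have "\<dots> = (\<integral>\<^sup>+y. ennreal (rhat w L y powr \<alpha>) \<partial>G L)"
    by (rule nn_integral_cong) (simp add: rn_emb)
  also have "\<dots> \<le> ennreal (exp (real L * (\<alpha>*(\<alpha>-1)/(2 * s\<^sup>2))))" using LY by simp
  finally show "(\<integral>\<^sup>+N. ennreal (rn L w N powr \<alpha>) \<partial>gauss_noise L n d s) \<le> ennreal (exp (real L * (\<alpha>*(\<alpha>-1)/(2 * s\<^sup>2))))" .
qed

end

lemma bind_pair_eq:
  assumes M: "prob_space M" and N: "prob_space N" and K: "K \<in> M \<Otimes>\<^sub>M N \<rightarrow>\<^sub>M subprob_algebra R"
  shows "bind (M \<Otimes>\<^sub>M N) K = bind M (\<lambda>x. bind N (\<lambda>y. K (x, y)))"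
proof -
  interpret M: prob_space M by fact
  interpret N: prob_space N by fact
  interpret MN: pair_prob_space M N ..
  have Kx: "(\<lambda>y. K (x, y)) \<in> N \<rightarrow>\<^sub>M subprob_algebra R" if "x \<in> space M" for x
    by (rule measurable_Pair2[OF K that])
  have Nsp: "N \<in> space (subprob_algebra N)"
    by (simp add: space_subprob_algebra N.subprob_space_axioms)
  have outer: "(\<lambda>x. bind N (\<lambda>y. K (x, y))) \<in> M \<rightarrow>\<^sub>M subprob_algebra R"
  proof -
    have "case_prod (\<lambda>x y. K (x, y)) \<in> M \<Otimes>\<^sub>M N \<rightarrow>\<^sub>M subprob_algebra R" using K by simp
    then show ?thesis by (rule measurable_bind'[OF measurable_const[OF Nsp]])
  qed
  have nonempty: "space (M \<Otimes>\<^sub>M N) \<noteq> {}" by (simp add: space_pair_measure M.not_empty N.not_empty)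
  show ?thesis
  proof (rule measure_eqI)
    show "sets (bind (M \<Otimes>\<^sub>M N) K) = sets (bind M (\<lambda>x. bind N (\<lambda>y. K (x, y))))"
    proof -
      have "sets (bind (M \<Otimes>\<^sub>M N) K) = sets R"
        by (rule sets_bind[OF sets_kernel[OF K] nonempty])
      moreover have "sets (bind M (\<lambda>x. bind N (\<lambda>y. K (x, y)))) = sets R"
        by (rule sets_bind[OF sets_kernel[OF outer] M.not_empty])
      ultimately show ?thesis by simp
    qed
  next
    fix E assume "E \<in> sets (bind (M \<Otimes>\<^sub>M N) K)"
    then have E: "E \<in> sets R" using sets_bind[OF sets_kernel[OF K] nonempty] by simp
    have KE: "(\<lambda>z. emeasure (K z) E) \<in> borel_measurable (M \<Otimes>\<^sub>M N)"
      by (rule measurable_compose[OF K measurable_emeasure_subprob_algebra[OF E]])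
    have "emeasure (bind (M \<Otimes>\<^sub>M N) K) E = (\<integral>\<^sup>+z. emeasure (K z) E \<partial>(M \<Otimes>\<^sub>M N))"
      by (rule emeasure_bind[OF nonempty K E])
    also have "\<dots> = (\<integral>\<^sup>+x. \<integral>\<^sup>+y. emeasure (K (x, y)) E \<partial>N \<partial>M)"
      by (rule N.nn_integral_fst[OF KE, symmetric])
    also have "\<dots> = (\<integral>\<^sup>+x. emeasure (bind N (\<lambda>y. K (x, y))) E \<partial>M)"
      by (intro nn_integral_cong) (rule emeasure_bind[OF N.not_empty Kx E, symmetric])
    also have "\<dots> = emeasure (bind M (\<lambda>x. bind N (\<lambda>y. K (x, y)))) E"
      by (rule emeasure_bind[OF M.not_empty outer E, symmetric])
    finally show "emeasure (bind (M \<Otimes>\<^sub>M N) K) E = emeasure (bind M (\<lambda>x. bind N (\<lambda>y. K (x, y)))) E" .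
  qed
qed


context gap_pair
begin

lemma rhat_nn: "rhat w k x \<ge> 0"
  unfolding rhat_def using ratio_pos[OF s] by (intro prod_nonneg) (auto intro: less_imp_le)

lemma main:
  fixes WX :: "(nat \<Rightarrow> nat \<Rightarrow> real) \<Rightarrow> (nat \<Rightarrow> nat \<Rightarrow> bool) \<Rightarrow> 'w measure"
    and B :: "(nat \<Rightarrow> nat \<Rightarrow> bool) \<Rightarrow> (nat \<Rightarrow> nat \<Rightarrow> real) \<Rightarrow> 't measure"
    and g :: "'t \<Rightarrow> (nat \<Rightarrow> real) \<Rightarrow> 'y"
    and MW :: "'w measure" and MT :: "'t measure" and MY :: "'y measure"
  assumes \<alpha>: "\<alpha> > 1"
    and pW: "prob_space (WX X Y)" and sW: "sets (WX X Y) = sets MW"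
    and f_meas: "\<And>x. (\<lambda>w. f w x) \<in> MW \<rightarrow>\<^sub>M RowS"
    and B_kernel: "B Y \<in> MatS \<rightarrow>\<^sub>M prob_algebra MT"
    and g_meas: "(\<lambda>(\<theta>, z). g \<theta> z) \<in> MT \<Otimes>\<^sub>M RowS \<rightarrow>\<^sub>M MY"
  shows "renyi_divergence \<alpha> (gap_mech L n d s WX f B g MW MT MY X Y A v) (gap_mech L n d s WX f B g MW MT MY X Y A' v)
      \<le> ereal (real L * \<alpha> / (2 * s\<^sup>2))"
proof -
  define W where "W = WX X Y"
  define GN where "GN = gauss_noise L n d s"
  define \<Omega> where "\<Omega> = MY \<Otimes>\<^sub>M (MW \<Otimes>\<^sub>M MT)"
  define Q0 where "Q0 = W \<Otimes>\<^sub>M GN"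
  define Zf where "Zf z = gap_Z L n d f A' X (fst z) (snd z)" for z
  define \<kappa> where "\<kappa> z = bind (B Y (Zf z)) (\<lambda>\<theta>. return \<Omega> (g \<theta> (Zf z v), (fst z, \<theta>)))" for z
  define r where "r z = rn L (fst z) (snd z)" for z
  define C where "C = real L * (\<alpha>*(\<alpha>-1)/(2 * s\<^sup>2))"
  interpret W: prob_space W unfolding W_def by (rule pW)
  have pGN: "prob_space GN" unfolding GN_def gauss_noise_eq
    by (rule prob_space.prob_space_distr[OF prob_G emb_meas])
  interpret GN: prob_space GN by (rule pGN)
  interpret Q0: pair_prob_space W GN ..
  have sGN: "sets GN = sets NoiseS" unfolding GN_def gauss_noise_eq by simp
  have sW': "sets W = sets MW" unfolding W_def by (rule sW)
  have fW: "(\<lambda>z. f (fst z) (X i) j) \<in> borel_measurable Q0" for i j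
  proof -
    have "(\<lambda>w. f w (X i) j) \<in> borel_measurable MW"
      using measurable_compose[OF f_meas[of "X i"] row_comp] .
    then have "(\<lambda>w. f w (X i) j) \<in> borel_measurable W" by (simp only: measurable_cong_sets[OF sW' refl])
    then show ?thesis unfolding Q0_def by (rule measurable_compose[OF measurable_fst])
  qed
  have FN: "(\<lambda>z. snd z l i j) \<in> borel_measurable Q0" for l i j
  proof -
    have "(\<lambda>N. N l i j) \<in> borel_measurable GN" using noise_comp by (simp only: measurable_cong_sets[OF sGN refl])
    then show ?thesis unfolding Q0_def by (rule measurable_compose[OF measurable_snd])
  qed
  have Zc: "(\<lambda>z. Zf z i c) \<in> borel_measurable Q0" for i c
  proof (cases "i < n \<and> c < (L + 1) * d")
    case True
    have "(\<lambda>z. gap_H n d f A' X (fst z) (snd z) (c div d) i (c mod d)) \<in> borel_measurable Q0"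
      by (rule gap_H_meas[where W=fst and F=snd]) (rule fW, rule FN)
    then show ?thesis using True by (simp add: Zf_def gap_Z_def)
  next
    case False
    then have "(\<lambda>z. Zf z i c) = (\<lambda>z. 0)" by (auto simp: Zf_def gap_Z_def)
    then show ?thesis by simp
  qed
  have Zf_meas: "Zf \<in> Q0 \<rightarrow>\<^sub>M MatS" by (rule to_mat_meas) (rule Zc)
  have Zv_meas: "(\<lambda>z. Zf z v) \<in> Q0 \<rightarrow>\<^sub>M RowS" by (rule to_row_meas) (rule Zc)
  have \<kappa>_meas: "\<kappa> \<in> Q0 \<rightarrow>\<^sub>M prob_algebra \<Omega>"
  proof -
    have Bm: "(\<lambda>z. B Y (Zf z)) \<in> Q0 \<rightarrow>\<^sub>M prob_algebra MT"
      by (rule measurable_compose[OF Zf_meas B_kernel])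
    have h1: "(\<lambda>p. (snd p, Zf (fst p) v)) \<in> Q0 \<Otimes>\<^sub>M MT \<rightarrow>\<^sub>M MT \<Otimes>\<^sub>M RowS"
      by (intro measurable_Pair measurable_snd measurable_compose[OF measurable_fst Zv_meas])
    have h1': "(\<lambda>p. g (snd p) (Zf (fst p) v)) \<in> Q0 \<Otimes>\<^sub>M MT \<rightarrow>\<^sub>M MY"
      using measurable_compose[OF h1 g_meas] by simp
    have fstW: "fst \<in> W \<Otimes>\<^sub>M GN \<rightarrow>\<^sub>M MW"
      using measurable_fst[of W GN] by (simp only: measurable_cong_sets[OF refl sW'])
    have h2: "(\<lambda>p. (fst (fst p), snd p)) \<in> Q0 \<Otimes>\<^sub>M MT \<rightarrow>\<^sub>M MW \<Otimes>\<^sub>M MT"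
      unfolding Q0_def by (intro measurable_Pair measurable_snd measurable_compose[OF measurable_fst fstW])
    have h: "(\<lambda>p. (g (snd p) (Zf (fst p) v), (fst (fst p), snd p))) \<in> Q0 \<Otimes>\<^sub>M MT \<rightarrow>\<^sub>M \<Omega>"
      unfolding \<Omega>_def by (intro measurable_Pair h1' h2)
    have "(\<lambda>p. return \<Omega> (g (snd p) (Zf (fst p) v), (fst (fst p), snd p))) \<in> Q0 \<Otimes>\<^sub>M MT \<rightarrow>\<^sub>M prob_algebra \<Omega>"
      by (rule measurable_compose[OF h measurable_return_prob_space])
    moreover have "(\<lambda>p. return \<Omega> (g (snd p) (Zf (fst p) v), (fst (fst p), snd p)))
        = (\<lambda>(z, \<theta>). return \<Omega> (g \<theta> (Zf z v), (fst z, \<theta>)))" by (auto simp: split_beta)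
    ultimately have G: "(\<lambda>(z, \<theta>). return \<Omega> (g \<theta> (Zf z v), (fst z, \<theta>))) \<in> Q0 \<Otimes>\<^sub>M MT \<rightarrow>\<^sub>M prob_algebra \<Omega>" by simp
    show ?thesis unfolding \<kappa>_def[abs_def]
      by (rule measurable_bind_prob_space2[OF Bm G])
  qed
  have \<kappa>_sub: "\<kappa> \<in> Q0 \<rightarrow>\<^sub>M subprob_algebra \<Omega>" by (rule measurable_prob_algebraD[OF \<kappa>_meas])
  have MA': "gap_mech L n d s WX f B g MW MT MY X Y A' v = bind Q0 \<kappa>"
  proof -
    have "bind Q0 \<kappa> = bind W (\<lambda>x. bind GN (\<lambda>y. \<kappa> (x, y)))"
      unfolding Q0_def by (rule bind_pair_eq[OF pW[folded W_def] pGN \<kappa>_sub[unfolded Q0_def]])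
    then show ?thesis by (simp add: gap_mech_def W_def GN_def \<Omega>_def \<kappa>_def Zf_def)
  qed
  have Tm: "(\<lambda>(x, y). Tn L x y) \<in> W \<Otimes>\<^sub>M GN \<rightarrow>\<^sub>M GN"
  proof -
    have "(\<lambda>z. Tn L (fst z) (snd z)) \<in> Q0 \<rightarrow>\<^sub>M NoiseS"
      by (rule Tn_meas_gen[where W=fst and F=snd]) (rule fW, rule FN)
    moreover have "(\<lambda>z. Tn L (fst z) (snd z)) = (\<lambda>(x, y). Tn L x y)" by (auto simp: split_beta)
    ultimately show ?thesis unfolding Q0_def by (simp only: measurable_cong_sets[OF refl sGN])
  qed
  have rm: "r \<in> borel_measurable Q0" unfolding r_def
    by (rule rn_meas_gen[where W=fst and F=snd]) (rule fW, rule FN)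
  have rm': "(\<lambda>(x, y). ennreal (rn L x y)) \<in> borel_measurable (W \<Otimes>\<^sub>M GN)"
  proof -
    have "(\<lambda>z. ennreal (r z)) \<in> borel_measurable Q0" using rm by measurable
    moreover have "(\<lambda>z. ennreal (r z)) = (\<lambda>(x, y). ennreal (rn L x y))" by (auto simp: r_def split_beta)
    ultimately show ?thesis unfolding Q0_def by simp
  qed
  have dens: "distr (W \<Otimes>\<^sub>M GN) (W \<Otimes>\<^sub>M GN) (\<lambda>(x, y). (x, Tn L x y)) = density (W \<Otimes>\<^sub>M GN) (\<lambda>(x, y). ennreal (rn L x y))"
  proof (rule shear)
    show "sigma_finite_measure GN" by (rule GN.sigma_finite_measure_axioms)
    show "(\<lambda>(x, y). Tn L x y) \<in> W \<Otimes>\<^sub>M GN \<rightarrow>\<^sub>M GN" by (rule Tm)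
    show "(\<lambda>(x, y). ennreal (rn L x y)) \<in> borel_measurable (W \<Otimes>\<^sub>M GN)" by (rule rm')
    fix x
    have "distr GN GN (Tn L x) = distr GN NoiseS (Tn L x)"
      by (rule distr_cong) (simp_all add: sGN)
    also have "\<dots> = density GN (\<lambda>N. ennreal (rn L x N))"
      using noise_step[OF \<alpha>, of L x] by (simp add: GN_def)
    finally show "distr GN GN (Tn L x) = density GN (\<lambda>y. ennreal (rn L x y))" .
  qed
  define Tt where "Tt = (\<lambda>(x, y). (x, Tn L x y))"
  have Tt_meas: "Tt \<in> Q0 \<rightarrow>\<^sub>M Q0"
  proof -
    have "(\<lambda>z. (fst z, case z of (x, y) \<Rightarrow> Tn L x y)) \<in> W \<Otimes>\<^sub>M GN \<rightarrow>\<^sub>M W \<Otimes>\<^sub>M GN"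
      by (intro measurable_Pair measurable_fst Tm)
    moreover have "(\<lambda>z. (fst z, case z of (x, y) \<Rightarrow> Tn L x y)) = Tt" by (auto simp: Tt_def split_beta)
    ultimately show ?thesis unfolding Q0_def by simp
  qed
  have densQ: "density Q0 (\<lambda>z. ennreal (r z)) = distr Q0 Q0 Tt"
  proof -
    have "(\<lambda>z. ennreal (r z)) = (\<lambda>(x, y). ennreal (rn L x y))" by (auto simp: r_def split_beta)
    then show ?thesis using dens unfolding Q0_def Tt_def by simp
  qed
  have pP0: "prob_space (density Q0 (\<lambda>z. ennreal (r z)))"
    unfolding densQ by (rule prob_space.prob_space_distr[OF _ Tt_meas]) (simp add: Q0_def Q0.P.prob_space_axioms)
  have MA: "gap_mech L n d s WX f B g MW MT MY X Y A v = bind (density Q0 (\<lambda>z. ennreal (r z))) \<kappa>"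
  proof -
    have "bind (density Q0 (\<lambda>z. ennreal (r z))) \<kappa> = bind (distr Q0 Q0 Tt) \<kappa>" by (simp only: densQ)
    also have "\<dots> = bind Q0 (\<lambda>z. \<kappa> (Tt z))"
      by (rule bind_distr[OF Tt_meas \<kappa>_sub]) (simp add: Q0_def space_pair_measure W.not_empty GN.not_empty)
    also have "\<dots> = bind W (\<lambda>x. bind GN (\<lambda>y. \<kappa> (Tt (x, y))))"
      unfolding Q0_def by (rule bind_pair_eq[OF pW[folded W_def] pGN measurable_compose[OF Tt_meas[unfolded Q0_def] \<kappa>_sub[unfolded Q0_def]]])
    also have "\<dots> = gap_mech L n d s WX f B g MW MT MY X Y A v"
      by (simp add: gap_mech_def W_def GN_def \<Omega>_def \<kappa>_def Zf_def Tt_def Z_Tn)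
    finally show ?thesis by simp
  qed
  have r_nn: "r z \<ge> 0" for z by (simp add: r_def rn_def rhat_nn)
  have R: "(\<integral>\<^sup>+z. ennreal (r z powr \<alpha>) \<partial>Q0) \<le> ennreal (exp C)"
  proof -
    have m: "(\<lambda>z. ennreal (r z powr \<alpha>)) \<in> borel_measurable (W \<Otimes>\<^sub>M GN)" using rm unfolding Q0_def by measurable
    have "(\<integral>\<^sup>+z. ennreal (r z powr \<alpha>) \<partial>Q0) = (\<integral>\<^sup>+x. \<integral>\<^sup>+y. ennreal (r (x, y) powr \<alpha>) \<partial>GN \<partial>W)"
      unfolding Q0_def by (rule GN.nn_integral_fst[OF m, symmetric])
    also have "\<dots> \<le> (\<integral>\<^sup>+x. ennreal (exp C) \<partial>W)"
    proof (intro nn_integral_mono)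
      fix x
      show "(\<integral>\<^sup>+y. ennreal (r (x, y) powr \<alpha>) \<partial>GN) \<le> ennreal (exp C)"
        using noise_step[OF \<alpha>, of L x] by (simp add: r_def GN_def C_def)
    qed
    also have "\<dots> = ennreal (exp C)" by (simp add: W.emeasure_space_1)
    finally show ?thesis .
  qed
  have "renyi_divergence \<alpha> (bind (density Q0 (\<lambda>z. ennreal (r z))) \<kappa>) (bind Q0 \<kappa>) \<le> ereal (ln (exp C) / (\<alpha> - 1))"
    by (rule renyi_dp[OF \<alpha> _ pP0 rm r_nn \<kappa>_meas R]) (simp add: Q0_def Q0.P.prob_space_axioms)
  moreover have "ln (exp C) / (\<alpha> - 1) = real L * \<alpha> / (2 * s\<^sup>2)"
  proof -
    have "C = (real L * \<alpha> / (2 * s\<^sup>2)) * (\<alpha> - 1)" by (simp add: C_def)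
    then have "C / (\<alpha> - 1) = real L * \<alpha> / (2 * s\<^sup>2)" using \<alpha> by simp
    then show ?thesis by simp
  qed
  ultimately show ?thesis by (simp add: MA MA')
qed

end


theorem corollaryH4:
  fixes \<alpha> s :: real and L n m d :: nat
    and WX :: "(nat \<Rightarrow> nat \<Rightarrow> real) \<Rightarrow> (nat \<Rightarrow> nat \<Rightarrow> bool) \<Rightarrow> 'w measure"
    and f :: "'w \<Rightarrow> (nat \<Rightarrow> real) \<Rightarrow> (nat \<Rightarrow> real)"
    and B :: "(nat \<Rightarrow> nat \<Rightarrow> bool) \<Rightarrow> (nat \<Rightarrow> nat \<Rightarrow> real) \<Rightarrow> 't measure"
    and g :: "'t \<Rightarrow> (nat \<Rightarrow> real) \<Rightarrow> 'y"
    and MW :: "'w measure" and MT :: "'t measure" and MY :: "'y measure"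
  assumes "\<alpha> > 1" and "s > 0" and "L \<ge> 1"
    and WX: "\<And>X Y. prob_space (WX X Y) \<and> sets (WX X Y) = sets MW"
    and f_meas: "\<And>x. (\<lambda>w. f w x) \<in> MW \<rightarrow>\<^sub>M RowS"
    and B_kernel: "\<And>Y. B Y \<in> MatS \<rightarrow>\<^sub>M prob_algebra MT"
    and g_meas: "(\<lambda>(\<theta>, z). g \<theta> z) \<in> MT \<Otimes>\<^sub>M RowS \<rightarrow>\<^sub>M MY"
  shows "edge_GDP n m \<alpha> (real L * \<alpha> / (2 * s\<^sup>2))
           (gap_mech L n d s WX f B g MW MT MY)"
  unfolding edge_GDP_def
proof (intro allI impI)
  fix v X Y A A'
  assume "m \<le> v \<and> v < n \<and> edge_adjacent n A A'"
  then have adj: "edge_adjacent n A A'" by simp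
  then have "card {(i, j). i < n \<and> j < n \<and> A i j \<noteq> A' i j} = 1" by (simp add: edge_adjacent_def)
  then obtain p where p: "{(i, j). i < n \<and> j < n \<and> A i j \<noteq> A' i j} = {p}" by (rule card_1_singletonE)
  obtain i0 k0 where pp: "p = (i0, k0)" by (cases p)
  have ik: "i0 < n" "k0 < n" using p pp by auto
  have same: "A i k = A' i k" if "i < n" "k < n" "(i, k) \<noteq> (i0, k0)" for i k
  proof (rule ccontr)
    assume "A i k \<noteq> A' i k"
    then have "(i, k) \<in> {(i, j). i < n \<and> j < n \<and> A i j \<noteq> A' i j}" using that by simp
    then have "(i, k) = p" using p by blast
    then show False using pp that by simp
  qed
  interpret gap_pair n d f X A A' i0 k0 s
    by unfold_locales (use ik same \<open>s > 0\<close> in auto)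
  show "renyi_divergence \<alpha> (gap_mech L n d s WX f B g MW MT MY X Y A v) (gap_mech L n d s WX f B g MW MT MY X Y A' v)
      \<le> ereal (real L * \<alpha> / (2 * s\<^sup>2))"
    by (rule main[OF \<open>\<alpha> > 1\<close> _ _ f_meas B_kernel g_meas]) (use WX in auto)
qed


end
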